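(* Consider the $L$-layer LSTM described in the context and let $k\in\mathbb{Z}_{\ge0}$. For any initial states $s_1(0),s_2(0)$ with $s^{(l)}_1(0),s^{(l)}_2(0)\in\mathcal{S}^{(l)}(k)$ for all $l\in[L]$, any input sequence $x(0:t)\in[-x_{\max},x_{\max}]^{n_x\times(t+1)}$ and any integer $t>0$, $\|s^{(L)}(t,s_1(0),x(0:t))-s^{(L)}(t,s_2(0),x(0:t))\|\le\tilde\beta\big(\|s^{(1)}_1(0)-s^{(1)}_2(0)\|,\dots,\|s^{(L)}_1(0)-s^{(L)}_2(0)\|,t;k\big)$, where for nonnegative scalars $s^{(1)},\dots,s^{(L)}$, $\tilde\beta(s^{(1:L)},t;k)=\mu^{(L)}(t)\rho(A^{(L)}_s(k))^t s^{(L)}+\sum_{l=1}^{L-1}\mu^{(l:L)}(t)\frac{(t+L-l)!}{t!(L-l)!}\max_{i=l,\dots,L}\rho(A^{(i)}_s(k))^t\Big(\prod_{i=l+1}^L\|a^{(i)}_x(k)\|\Big)s^{(l)}$ (the sum being $0$ when $L=1$), with $\mu^{(l:L)}(t)=\prod_{i=l}^L\mu^{(i)}(t)$, $\mu^{(l)}(t)=\sqrt{(1+(r^{(l)})^{2t})+\frac{|\nu^{(l)}|^2}{|\lambda^{(l)}_1|^2}\Big(\frac{1-(r^{(l)})^t}{1-r^{(l)}}\Big)^2}$, where $A^{(l)}_s(k)=U\begin{bmatrix}\lambda^{(l)}_1&\nu^{(l)}\\0&\lambda^{(l)}_2\end{bmatrix}U^*$ is any decomposition with $U$ unitary and $\lambda^{(l)}_1\ge\lambda^{(l)}_2$,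 and $r^{(l)}=|\lambda^{(l)}_2|/|\lambda^{(l)}_1|\in[0,1]$.
   Context: LSTM: fix $L\in\mathbb{N}$, dimensions $n_x,n_c$, $x_{\max}>0$. For $l\in[L]$ let $n^{(l)}=n_x$ if $l=1$, $n^{(l)}=n_c$ if $l\ge2$; weights $W^{(l)}_*\in\mathbb{R}^{n_c\times n^{(l)}}$, $U^{(l)}_*\in\mathbb{R}^{n_c\times n_c}$, biases $b^{(l)}_*\in\mathbb{R}^{n_c}$, $*\in\{f,i,c,o\}$. With $\sigma(w)=1/(1+e^{-w})$, $\phi=\tanh$, $\odot$ componentwise product: $c^{(l)}(t+1)=\sigma(W^{(l)}_f x^{(l)}(t)+U^{(l)}_f h^{(l)}(t)+b^{(l)}_f)\odot c^{(l)}(t)+\sigma(W^{(l)}_i x^{(l)}(t)+U^{(l)}_i h^{(l)}(t)+b^{(l)}_i)\odot\phi(W^{(l)}_c x^{(l)}(t)+U^{(l)}_c h^{(l)}(t)+b^{(l)}_c)$, $h^{(l)}(t+1)=\sigma(W^{(l)}_o x^{(l)}(t)+U^{(l)}_o h^{(l)}(t)+b^{(l)}_o)\odot\phi(c^{(l)}(t+1))$, with $x^{(1)}(t)=x(t)$, $x^{(l)}(t)=h^{(l-1)}(t+1)$ for $l\ge2$. $s^{(l)}(t)=(c^{(l)}(t),h^{(l)}(t))$; $s^{(l)}(t,s(0),x(0:t))$ denotes the layer-$l$ state at time $t$ from initial state $s(0)=(s^{(1)}(0),\dots,s^{(L)}(0))$ under input $x$. Quantities: $x^{(l)}_{\max}=x_{\max}$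 if $l=1$, $=1$ if $l\ge2$; $|A|$ entrywise absolute value; $\mathbf{1}_n$ all-ones vector; $v_+$ componentwise positive part; $\|\cdot\|_\infty$ max norm. For $\eta\ge0$, $*\in\{f,i,o\}$: $G^{(l)}_*(\eta)=\|(x^{(l)}_{\max}|W^{(l)}_*|\mathbf{1}_{n^{(l)}}+\eta|U^{(l)}_*|\mathbf{1}_{n_c}+b^{(l)}_* )_+\|_\infty$, $G^{(l)}_c(\eta)=\|x^{(l)}_{\max}|W^{(l)}_c|\mathbf{1}_{n^{(l)}}+\eta|U^{(l)}_c|\mathbf{1}_{n_c}+|b^{(l)}_c|\|_\infty$. With $\eta^{(l)}(-1)=1$, $k\ge0$: $\overline{\sigma}^{(l)}_*(k)=\sigma(G^{(l)}_*(\eta^{(l)}(k-1)))$, $\overline{\phi}^{(l)}_c(k)=\phi(G^{(l)}_c(\eta^{(l)}(k-1)))$, $\overline{c}^{(l)}(k)=\overline{\sigma}^{(l)}_i(k)\overline{\phi}^{(l)}_c(k)/(1-\overline{\sigma}^{(l)}_f(k))$, $\eta^{(l)}(k)=\phi(\overline{c}^{(l)}(k))\overline{\sigma}^{(l)}_o(k)$. $\mathcal{S}^{(l)}(k)=\{(c,h):\|c\|_\infty\le\overline{c}^{(l)}(k),\|h\|_\infty\le\phi(\overline{c}^{(l)}(k))\overline{\sigma}^{(l)}_o(k)\}$. With $\|\cdot\|$ the Euclidean norm / induced 2-norm: $\alpha^{(l)}_s(k)=\tfrac14\|U^{(l)}_f\|\overline{c}^{(l)}(k)+\overline{\sigma}^{(l)}_i(k)\|U^{(l)}_c\|+\tfrac14\|U^{(l)}_i\|\overline{\phi}^{(l)}_c(k)$,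 $A^{(l)}_s(k)=\begin{bmatrix}\overline{\sigma}^{(l)}_f(k)&\alpha^{(l)}_s(k)\\ \overline{\sigma}^{(l)}_o(k)\overline{\sigma}^{(l)}_f(k)&\alpha^{(l)}_s(k)\overline{\sigma}^{(l)}_o(k)+\tfrac14\phi(\overline{c}^{(l)}(k))\|U^{(l)}_o\|\end{bmatrix}$; $\alpha^{(l)}_x(k)=\tfrac14\|W^{(l)}_f\|\overline{c}^{(l)}(k)+\overline{\sigma}^{(l)}_i(k)\|W^{(l)}_c\|+\tfrac14\|W^{(l)}_i\|\overline{\phi}^{(l)}_c(k)$, $a^{(l)}_x(k)=\big(\alpha^{(l)}_x(k),\ \alpha^{(l)}_x(k)\overline{\sigma}^{(l)}_o(k)+\tfrac14\phi(\overline{c}^{(l)}(k))\|W^{(l)}_o\|\big)^\top$; $\rho$ is spectral radius. *)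

theory Defs
  imports "HOL-Analysis.Analysis"
begin

section \<open>Multi-layer LSTM (Proposition 5.2 setting)\<close>

text \<open>Gates f, i, c, o.\<close>
datatype gate = Gf | Gi | Gc | Go

text \<open>Parameters of an L-layer LSTM.  Vectors in R^{n_x} are real^'x, vectors in R^{n_c}
 are real^'c.  Layer 1 input weights are Win, input weights of layers l >= 2 are Wh l,
 recurrent weights U l, biases b l (layers are indexed 1..L).\<close>
record ('x, 'c) lstm =
  Win :: "gate \<Rightarrow> real^'x^'c"
  Wh  :: "nat \<Rightarrow> gate \<Rightarrow> real^'c^'c"
  Uh  :: "nat \<Rightarrow> gate \<Rightarrow> real^'c^'c"
  bh  :: "nat \<Rightarrow> gate \<Rightarrow> real^'c"

definition sigm :: "real \<Rightarrow> real" where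
  "sigm w = 1 / (1 + exp (- w))"

type_synonym 'c lstate = "(real^'c) \<times> (real^'c)"  \<comment> \<open>(c, h)\<close>

text \<open>One LSTM cell update of layer l, given the input contributions wx g = W_g^{(l)} x^{(l)}(t).\<close>
definition cell :: "('x::finite, 'c::finite) lstm \<Rightarrow> nat \<Rightarrow> (gate \<Rightarrow> real^'c) \<Rightarrow> 'c lstate \<Rightarrow> 'c lstate" where
  "cell P l wx s =
     (let c = fst s; h = snd s;
          pre = (\<lambda>g. wx g + Uh P l g *v h + bh P l g);
          c' = (\<chi> j. sigm (pre Gf $ j) * c $ j + sigm (pre Gi $ j) * tanh (pre Gc $ j));
          h' = (\<chi> j. sigm (pre Go $ j) * tanh (c' $ j))
      in (c', h'))"

text \<open>States of all layers at time t+1 from the states at time t and input x(t).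
 Layer 1 receives x(t); layer l >= 2 receives h^{(l-1)}(t+1).\<close>
fun newst :: "('x::finite, 'c::finite) lstm \<Rightarrow> real^'x \<Rightarrow> (nat \<Rightarrow> 'c lstate) \<Rightarrow> nat \<Rightarrow> 'c lstate" where
  "newst P x s 0 = s 0"
| "newst P x s (Suc 0) = cell P 1 (\<lambda>g. Win P g *v x) (s 1)"
| "newst P x s (Suc (Suc l)) =
     cell P (Suc (Suc l)) (\<lambda>g. Wh P (Suc (Suc l)) g *v snd (newst P x s (Suc l))) (s (Suc (Suc l)))"

text \<open>traj P s0 x t l = s^{(l)}(t, s(0), x(0:t)).\<close>
fun traj :: "('x::finite, 'c::finite) lstm \<Rightarrow> (nat \<Rightarrow> 'c lstate) \<Rightarrow> (nat \<Rightarrow> real^'x) \<Rightarrow> nat \<Rightarrow> nat \<Rightarrow> 'c lstate" where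
  "traj P s0 x 0 = s0"
| "traj P s0 x (Suc t) = newst P (x t) (traj P s0 x t)"

section \<open>Bounds\<close>

definition ninf :: "real^'n::finite \<Rightarrow> real" where
  "ninf v = Max (range (\<lambda>i. \<bar>v $ i\<bar>))"

definition posp :: "real^'n::finite \<Rightarrow> real^'n" where
  "posp v = (\<chi> i. max 0 (v $ i))"

definition absrow :: "real^'m::finite^'n::finite \<Rightarrow> real^'n" where
  "absrow A = (\<chi> i. \<Sum>j\<in>UNIV. \<bar>A $ i $ j\<bar>)"   \<comment> \<open>|A| 1\<close>

definition vabs :: "real^'n::finite \<Rightarrow> real^'n" where
  "vabs v = (\<chi> i. \<bar>v $ i\<bar>)"

text \<open>x^{(l)}_max |W^{(l)}_g| 1 and ||W^{(l)}_g|| (induced 2-norm).\<close>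
definition Wrow :: "('x::finite, 'c::finite) lstm \<Rightarrow> real \<Rightarrow> nat \<Rightarrow> gate \<Rightarrow> real^'c" where
  "Wrow P xmax l g = (if l = 1 then xmax *\<^sub>R absrow (Win P g) else absrow (Wh P l g))"

definition Wnorm :: "('x::finite, 'c::finite) lstm \<Rightarrow> nat \<Rightarrow> gate \<Rightarrow> real" where
  "Wnorm P l g = (if l = 1 then onorm (\<lambda>v. Win P g *v v) else onorm (\<lambda>v. Wh P l g *v v))"

definition Unorm :: "('x::finite, 'c::finite) lstm \<Rightarrow> nat \<Rightarrow> gate \<Rightarrow> real" where
  "Unorm P l g = onorm (\<lambda>v. Uh P l g *v v)"

text \<open>G^{(l)}_g(eta) for g in {f,i,o} and G^{(l)}_c(eta).\<close>
definition Gs :: "('x::finite, 'c::finite) lstm \<Rightarrow> real \<Rightarrow> nat \<Rightarrow> gate \<Rightarrow> real \<Rightarrow> real" where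
  "Gs P xmax l g eta = ninf (posp (Wrow P xmax l g + eta *\<^sub>R absrow (Uh P l g) + bh P l g))"

definition Gcc :: "('x::finite, 'c::finite) lstm \<Rightarrow> real \<Rightarrow> nat \<Rightarrow> real \<Rightarrow> real" where
  "Gcc P xmax l eta = ninf (Wrow P xmax l Gc + eta *\<^sub>R absrow (Uh P l Gc) + vabs (bh P l Gc))"

text \<open>etap P xmax l k = eta^{(l)}(k-1); in particular etap ... 0 = eta^{(l)}(-1) = 1.\<close>
fun etap :: "('x::finite, 'c::finite) lstm \<Rightarrow> real \<Rightarrow> nat \<Rightarrow> nat \<Rightarrow> real" where
  "etap P xmax l 0 = 1"
| "etap P xmax l (Suc k) =
     (let e = etap P xmax l k;
          cb = sigm (Gs P xmax l Gi e) * tanh (Gcc P xmax l e) / (1 - sigm (Gs P xmax l Gf e))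
      in tanh cb * sigm (Gs P xmax l Go e))"

definition sigbar :: "('x::finite, 'c::finite) lstm \<Rightarrow> real \<Rightarrow> nat \<Rightarrow> gate \<Rightarrow> nat \<Rightarrow> real" where
  "sigbar P xmax l g k = sigm (Gs P xmax l g (etap P xmax l k))"

definition phibar :: "('x::finite, 'c::finite) lstm \<Rightarrow> real \<Rightarrow> nat \<Rightarrow> nat \<Rightarrow> real" where
  "phibar P xmax l k = tanh (Gcc P xmax l (etap P xmax l k))"

definition cbar :: "('x::finite, 'c::finite) lstm \<Rightarrow> real \<Rightarrow> nat \<Rightarrow> nat \<Rightarrow> real" where
  "cbar P xmax l k = sigbar P xmax l Gi k * phibar P xmax l k / (1 - sigbar P xmax l Gf k)"

definition Sset :: "('x::finite, 'c::finite) lstm \<Rightarrow> real \<Rightarrow> nat \<Rightarrow> nat \<Rightarrow> 'c lstate set" where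
  "Sset P xmax l k = {(c, h). ninf c \<le> cbar P xmax l k \<and>
                       ninf h \<le> tanh (cbar P xmax l k) * sigbar P xmax l Go k}"

definition mat2 :: "'a \<Rightarrow> 'a \<Rightarrow> 'a \<Rightarrow> 'a \<Rightarrow> 'a^2^2" where
  "mat2 a b c d = (\<chi> i j. if i = 1 then (if j = 1 then a else b) else (if j = 1 then c else d))"

definition alpha_s :: "('x::finite, 'c::finite) lstm \<Rightarrow> real \<Rightarrow> nat \<Rightarrow> nat \<Rightarrow> real" where
  "alpha_s P xmax l k = 1/4 * Unorm P l Gf * cbar P xmax l k + sigbar P xmax l Gi k * Unorm P l Gc
                        + 1/4 * Unorm P l Gi * phibar P xmax l k"

definition A_s :: "('x::finite, 'c::finite) lstm \<Rightarrow> real \<Rightarrow> nat \<Rightarrow> nat \<Rightarrow> real^2^2" where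
  "A_s P xmax l k = mat2 (sigbar P xmax l Gf k) (alpha_s P xmax l k)
      (sigbar P xmax l Go k * sigbar P xmax l Gf k)
      (alpha_s P xmax l k * sigbar P xmax l Go k + 1/4 * tanh (cbar P xmax l k) * Unorm P l Go)"

definition alpha_x :: "('x::finite, 'c::finite) lstm \<Rightarrow> real \<Rightarrow> nat \<Rightarrow> nat \<Rightarrow> real" where
  "alpha_x P xmax l k = 1/4 * Wnorm P l Gf * cbar P xmax l k + sigbar P xmax l Gi k * Wnorm P l Gc
                        + 1/4 * Wnorm P l Gi * phibar P xmax l k"

definition a_x :: "('x::finite, 'c::finite) lstm \<Rightarrow> real \<Rightarrow> nat \<Rightarrow> nat \<Rightarrow> real^2" where
  "a_x P xmax l k = (\<chi> i. if i = 1 then alpha_x P xmax l k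
      else alpha_x P xmax l k * sigbar P xmax l Go k + 1/4 * tanh (cbar P xmax l k) * Wnorm P l Go)"

section \<open>Spectral radius, unitary matrices\<close>

definition cmat :: "real^'n::finite^'m::finite \<Rightarrow> complex^'n^'m" where
  "cmat A = (\<chi> i j. complex_of_real (A $ i $ j))"

definition eigenvalues :: "complex^'n::finite^'n \<Rightarrow> complex set" where
  "eigenvalues A = {z. \<exists>v. v \<noteq> 0 \<and> A *v v = z *s v}"

definition spec_rad :: "real^'n::finite^'n \<Rightarrow> real" where
  "spec_rad A = Max (cmod ` eigenvalues (cmat A))"

definition cadj :: "complex^'n::finite^'m::finite \<Rightarrow> complex^'m^'n" where
  "cadj U = (\<chi> i j. cnj (U $ j $ i))"

definition unitary :: "complex^'n::finite^'n \<Rightarrow> bool" where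
  "unitary U \<longleftrightarrow> U ** cadj U = mat 1 \<and> cadj U ** U = mat 1"

text \<open>mu^{(l)}(t) for a Schur decomposition with data lam1, lam2, nu;
 the factor (1 - r^t)/(1 - r) is written as the geometric sum sum_{j<t} r^j.\<close>
definition mu :: "real \<Rightarrow> real \<Rightarrow> complex \<Rightarrow> nat \<Rightarrow> real" where
  "mu lam1 lam2 nu t =
     (let r = \<bar>lam2\<bar> / \<bar>lam1\<bar>
      in sqrt ((1 + r ^ (2 * t)) + (cmod nu)\<^sup>2 / \<bar>lam1\<bar>\<^sup>2 * (\<Sum>j<t. r ^ j)\<^sup>2))"

end

theory Submission
  imports Defs
begin

(* ---- part P1 ---- *)
lemma sigm_pos: "0 < sigm w" unfolding sigm_def by (simp add: add_pos_pos)
lemma sigm_lt1: "sigm w < 1" unfolding sigm_def by (simp add: add_pos_pos)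
lemma sigm_mono: "a \<le> b \<Longrightarrow> sigm a \<le> sigm b"
  unfolding sigm_def by (simp add: add_pos_pos frac_le)

lemma sigm_deriv: "(sigm has_real_derivative (exp (-w) / (1 + exp (-w))^2)) (at w)"
proof -
  have "1 + exp (-w) \<noteq> 0" by (metis add_pos_pos exp_gt_zero less_irrefl zero_less_one)
  hence "((\<lambda>w. 1 / (1 + exp (- w))) has_real_derivative (exp (-w) / (1 + exp (-w))^2)) (at w)"
    by (auto intro!: derivative_eq_intros simp: power2_eq_square)
  moreover have "(\<lambda>w. 1 / (1 + exp (- w))) = sigm" by (auto simp: sigm_def)
  ultimately show ?thesis by simp
qed

lemma sigm_deriv_bound: "exp (-(w::real)) / (1 + exp (-w))^2 \<le> 1/4"
proof -
  have e: "exp (-w) > 0" by (rule exp_gt_zero)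
  have "0 \<le> (1 - exp (-w))^2" by simp
  hence "4 * exp (-w) \<le> (1 + exp (-w))^2" by (simp add: power2_eq_square algebra_simps)
  moreover have "(1 + exp (-w))^2 > 0" using e by (metis add_pos_pos zero_less_one zero_less_power2 less_irrefl)
  ultimately show ?thesis by (simp add: field_simps)
qed

lemma lip_from_deriv:
  fixes f f' :: "real \<Rightarrow> real"
  assumes d: "\<And>x. (f has_real_derivative f' x) (at x)" and b: "\<And>x. \<bar>f' x\<bar> \<le> K"
  shows "\<bar>f a - f b\<bar> \<le> K * \<bar>a - b\<bar>"
proof -
  have main: "\<bar>f y - f x\<bar> \<le> K * \<bar>y - x\<bar>" if "x < y" for x y
  proof -
    have "\<exists>z>x. z < y \<and> f y - f x = (y - x) * f' z"
      by (rule MVT2[OF that]) (rule d)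
    then obtain z where "f y - f x = (y - x) * f' z" by blast
    hence "\<bar>f y - f x\<bar> = \<bar>y - x\<bar> * \<bar>f' z\<bar>" by (simp add: abs_mult)
    also have "\<dots> \<le> \<bar>y - x\<bar> * K" using b by (intro mult_left_mono) auto
    finally show ?thesis by (simp add: mult.commute)
  qed
  show ?thesis
    using main[of a b] main[of b a] by (cases a b rule: linorder_cases) (auto simp: abs_minus_commute)
qed

lemma sigm_lip: "\<bar>sigm a - sigm b\<bar> \<le> 1/4 * \<bar>a - b\<bar>"
  apply (rule lip_from_deriv[OF sigm_deriv])
  using sigm_deriv_bound by (metis abs_of_nonneg divide_nonneg_nonneg exp_ge_zero zero_le_power2)

lemma tanh_deriv: "(tanh has_real_derivative (1 - tanh w ^ 2)) (at w)"
  proof -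
  have "cosh w \<noteq> 0" using cosh_real_pos[of w] by simp
  thus ?thesis unfolding tanh_def by (auto intro!: derivative_eq_intros simp: power2_eq_square field_split_simps)
qed

lemma tanh_abs_le1: "\<bar>tanh (w::real)\<bar> \<le> 1"
  using tanh_real_bounds[of w] by auto

lemma tanh_lip: "\<bar>tanh a - tanh b\<bar> \<le> 1 * \<bar>a - b::real\<bar>"
  apply (rule lip_from_deriv[OF tanh_deriv])
proof -
  fix x :: real
  have "(tanh x)^2 \<le> 1" using tanh_abs_le1[of x] by (simp add: abs_square_le_1)
  thus "\<bar>1 - (tanh x)^2\<bar> \<le> 1" by simp
qed

lemma tanh_mono: "a \<le> b \<Longrightarrow> tanh a \<le> tanh (b::real)"
  by (simp add: tanh_real_le_iff)

lemma tanh_nonneg: "0 \<le> a \<Longrightarrow> 0 \<le> tanh (a::real)"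
  by (simp add: tanh_real_nonneg_iff)

lemma abs_tanh_le: "\<bar>a\<bar> \<le> b \<Longrightarrow> \<bar>tanh a\<bar> \<le> tanh (b::real)"
  by (metis tanh_mono tanh_real_abs)

(* ---- part P2 ---- *)
lemma ninf_ge: "\<bar>v $ j\<bar> \<le> ninf v"
  unfolding ninf_def by (rule Max_ge) auto

lemma ninf_le: "(\<And>j. \<bar>v $ j\<bar> \<le> B) \<Longrightarrow> ninf v \<le> B"
  unfolding ninf_def by (subst Max_le_iff) auto

lemma ninf_nonneg: "0 \<le> ninf v"
  using ninf_ge[of v] abs_ge_zero order_trans by blast

lemma ninf_mono: "(\<And>j. \<bar>v $ j\<bar> \<le> \<bar>w $ j\<bar>) \<Longrightarrow> ninf v \<le> ninf w"
  by (rule ninf_le) (meson ninf_ge order_trans)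

lemma absrow_nonneg: "0 \<le> absrow A $ j"
  unfolding absrow_def by (simp add: sum_nonneg)

lemma Wrow_nonneg: "xmax \<ge> 0 \<Longrightarrow> 0 \<le> Wrow P xmax l g $ j"
  unfolding Wrow_def by (simp add: absrow_nonneg)

lemma Gs_mono: "e \<le> e' \<Longrightarrow> Gs P xmax l g e \<le> Gs P xmax l g e'"
  unfolding Gs_def
proof (rule ninf_mono)
  fix j assume "e \<le> e'"
  have "e * absrow (Uh P l g) $ j \<le> e' * absrow (Uh P l g) $ j"
    using \<open>e \<le> e'\<close> by (rule mult_right_mono[OF _ absrow_nonneg])
  thus "\<bar>posp (Wrow P xmax l g + e *\<^sub>R absrow (Uh P l g) + bh P l g) $ j\<bar>
     \<le> \<bar>posp (Wrow P xmax l g + e' *\<^sub>R absrow (Uh P l g) + bh P l g) $ j\<bar>"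
    unfolding posp_def by auto
qed

lemma Gcc_mono: "xmax \<ge> 0 \<Longrightarrow> 0 \<le> e \<Longrightarrow> e \<le> e' \<Longrightarrow> Gcc P xmax l e \<le> Gcc P xmax l e'"
  unfolding Gcc_def
proof (rule ninf_mono)
  fix j assume a: "xmax \<ge> 0" "0 \<le> e" "e \<le> e'"
  have "e * absrow (Uh P l Gc) $ j \<le> e' * absrow (Uh P l Gc) $ j"
    using a(3) by (rule mult_right_mono[OF _ absrow_nonneg])
  moreover have "0 \<le> e * absrow (Uh P l Gc) $ j" using a(2) absrow_nonneg by (rule mult_nonneg_nonneg)
  moreover have "0 \<le> Wrow P xmax l Gc $ j" using a Wrow_nonneg by blast
  ultimately show "\<bar>(Wrow P xmax l Gc + e *\<^sub>R absrow (Uh P l Gc) + vabs (bh P l Gc)) $ j\<bar>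
     \<le> \<bar>(Wrow P xmax l Gc + e' *\<^sub>R absrow (Uh P l Gc) + vabs (bh P l Gc)) $ j\<bar>"
    unfolding vabs_def by auto
qed

lemma Gcc_nonneg: "0 \<le> Gcc P xmax l e"
  unfolding Gcc_def by (rule ninf_nonneg)

lemma sigbar_pos: "0 < sigbar P xmax l g k" unfolding sigbar_def by (rule sigm_pos)
lemma sigbar_lt1: "sigbar P xmax l g k < 1" unfolding sigbar_def by (rule sigm_lt1)
lemma phibar_nonneg: "0 \<le> phibar P xmax l k"
  unfolding phibar_def using Gcc_nonneg by simp
lemma cbar_nonneg: "0 \<le> cbar P xmax l k"
  unfolding cbar_def using sigbar_pos[of P xmax l Gi k] sigbar_lt1[of P xmax l Gf k] phibar_nonneg[of P xmax l k]
  by simp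

lemma cbar_fix: "sigbar P xmax l Gf k * cbar P xmax l k + sigbar P xmax l Gi k * phibar P xmax l k
   = cbar P xmax l k"
  using sigbar_lt1[of P xmax l Gf k] unfolding cbar_def by (simp add: field_simps)

lemma etap_Suc': "etap P xmax l (Suc k) = tanh (cbar P xmax l k) * sigbar P xmax l Go k"
  by (simp add: cbar_def sigbar_def phibar_def Let_def)

lemma etap_nonneg: "0 \<le> etap P xmax l k"
proof (cases k)
  case 0 thus ?thesis by simp
next
  case (Suc m) thus ?thesis
    using etap_Suc'[of P xmax l m] cbar_nonneg[of P xmax l m] sigbar_pos[of P xmax l Go m] by simp
qed

lemma etap_le1: "etap P xmax l k \<le> 1"
proof (cases k)
  case 0 thus ?thesis by simp
next
  case (Suc m)
  have "tanh (cbar P xmax l m) \<le> 1" using tanh_abs_le1 by (simp add: abs_le_iff)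
  moreover have "tanh (cbar P xmax l m) \<ge> 0" using cbar_nonneg by simp
  moreover have "tanh (cbar P xmax l m) * sigbar P xmax l Go m \<le> 1 * 1"
    using calculation sigbar_lt1[of P xmax l Go m] sigbar_pos[of P xmax l Go m]
    by (intro mult_mono) auto
  ultimately show ?thesis
    using Suc etap_Suc'[of P xmax l m] by simp
qed

definition etaF :: "('x::finite, 'c::finite) lstm \<Rightarrow> real \<Rightarrow> nat \<Rightarrow> real \<Rightarrow> real" where
  "etaF P xmax l e = tanh (sigm (Gs P xmax l Gi e) * tanh (Gcc P xmax l e) / (1 - sigm (Gs P xmax l Gf e)))
      * sigm (Gs P xmax l Go e)"

lemma etap_Suc_F: "etap P xmax l (Suc k) = etaF P xmax l (etap P xmax l k)"
  by (simp only: etap.simps etaF_def Let_def)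

lemma etaF_mono:
  assumes x: "xmax \<ge> 0" and ee: "0 \<le> e" "e \<le> e'"
  shows "etaF P xmax l e \<le> etaF P xmax l e'"
proof -
  have g: "\<And>g. sigm (Gs P xmax l g e) \<le> sigm (Gs P xmax l g e')"
    using ee by (intro sigm_mono Gs_mono)
  have c: "tanh (Gcc P xmax l e) \<le> tanh (Gcc P xmax l e')" using ee x by (simp add: Gcc_mono)
  have c0: "0 \<le> tanh (Gcc P xmax l e)" using Gcc_nonneg by simp
  have f: "1 - sigm (Gs P xmax l Gf e') \<le> 1 - sigm (Gs P xmax l Gf e)" using g[of Gf] by simp
  have f0: "0 < 1 - sigm (Gs P xmax l Gf e')" using sigm_lt1 by simp
  have si: "0 \<le> sigm (Gs P xmax l Gi e)" using sigm_pos less_imp_le by blast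
  have "sigm (Gs P xmax l Gi e) * tanh (Gcc P xmax l e) \<le> sigm (Gs P xmax l Gi e') * tanh (Gcc P xmax l e')"
    using g[of Gi] c _ c0 by (rule mult_mono) (meson sigm_pos less_imp_le)
  hence cb: "sigm (Gs P xmax l Gi e) * tanh (Gcc P xmax l e) / (1 - sigm (Gs P xmax l Gf e))
      \<le> sigm (Gs P xmax l Gi e') * tanh (Gcc P xmax l e') / (1 - sigm (Gs P xmax l Gf e'))"
    using f f0 c0 si by (intro frac_le) (simp_all add: Gcc_nonneg less_imp_le[OF sigm_pos])
  have cb0: "0 \<le> sigm (Gs P xmax l Gi e) * tanh (Gcc P xmax l e) / (1 - sigm (Gs P xmax l Gf e))"
    using c0 si sigm_lt1[of "Gs P xmax l Gf e"] by simp
  have so: "0 \<le> sigm (Gs P xmax l Go e)" using sigm_pos less_imp_le by blast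
  show ?thesis unfolding etaF_def
    using cb cb0 g[of Go] so by (intro mult_mono) auto
qed

lemma etap_decr: "xmax \<ge> 0 \<Longrightarrow> etap P xmax l (Suc k) \<le> etap P xmax l k"
proof (induction k)
  case 0 thus ?case using etap_le1[of P xmax l 1] by simp
next
  case (Suc k)
  have "etaF P xmax l (etap P xmax l (Suc k)) \<le> etaF P xmax l (etap P xmax l k)"
    using Suc.prems etap_nonneg Suc.IH[OF Suc.prems] by (rule etaF_mono)
  thus ?case by (simp only: etap_Suc_F)
qed

(* ---- part P3 ---- *)
lemma sigbar_nonneg: "0 \<le> sigbar P xmax l g k" using sigbar_pos less_imp_le by blast
lemma sigm_nonneg: "0 \<le> sigm w" using sigm_pos less_imp_le by blast

lemma norm_vabs: "norm (vabs y) = norm y"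
  unfolding norm_vec_def vabs_def by simp

lemma vec_bound4:
  fixes x y1 y2 y3 y4 :: "real^'n::finite"
  assumes b: "\<And>j. \<bar>x$j\<bar> \<le> a1*\<bar>y1$j\<bar> + a2*\<bar>y2$j\<bar> + a3*\<bar>y3$j\<bar> + a4*\<bar>y4$j\<bar>"
    and a: "0 \<le> a1" "0 \<le> a2" "0 \<le> a3" "0 \<le> a4"
  shows "norm x \<le> a1 * norm y1 + a2 * norm y2 + a3 * norm y3 + a4 * norm y4"
proof -
  define z where "z = a1 *\<^sub>R vabs y1 + a2 *\<^sub>R vabs y2 + a3 *\<^sub>R vabs y3 + a4 *\<^sub>R vabs y4"
  have "norm x \<le> norm z"
  proof (rule norm_le_componentwise_cart)
    fix j
    have "0 \<le> z $ j" unfolding z_def vabs_def using a by simp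
    thus "norm (x $ j) \<le> norm (z $ j)" using b[of j] unfolding z_def vabs_def by simp
  qed
  also have "norm z \<le> norm (a1 *\<^sub>R vabs y1) + norm (a2 *\<^sub>R vabs y2) + norm (a3 *\<^sub>R vabs y3) + norm (a4 *\<^sub>R vabs y4)"
    unfolding z_def by (meson norm_triangle_le add_mono order_refl)
  also have "\<dots> = a1 * norm y1 + a2 * norm y2 + a3 * norm y3 + a4 * norm y4"
    using a by (simp add: norm_vabs)
  finally show ?thesis .
qed

lemma mv_abs:
  assumes "\<And>m. \<bar>h $ m\<bar> \<le> e"
  shows "\<bar>(A *v h) $ j\<bar> \<le> e * absrow A $ j"
proof -
  have "\<bar>(A *v h) $ j\<bar> = \<bar>\<Sum>m\<in>UNIV. A $ j $ m * h $ m\<bar>" by (simp add: matrix_vector_mult_def)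
  also have "\<dots> \<le> (\<Sum>m\<in>UNIV. \<bar>A $ j $ m\<bar> * e)"
    by (rule order_trans[OF sum_abs]) (auto intro!: sum_mono mult_left_mono simp: abs_mult assms)
  also have "\<dots> = e * absrow A $ j" unfolding absrow_def by (simp add: sum_distrib_left mult.commute)
  finally show ?thesis .
qed

lemma onorm_mv: "norm ((A::real^'n::finite^'m::finite) *v v) \<le> onorm (\<lambda>v. A *v v) * norm v"
  using onorm[OF matrix_vector_mul_bounded_linear[of A]] by simp

lemma onorm_mv_nonneg: "0 \<le> onorm (\<lambda>v. (A::real^'n::finite^'m::finite) *v v)"
  using onorm_pos_le[OF matrix_vector_mul_bounded_linear[of A]] by simp

lemma Unorm_nonneg: "0 \<le> Unorm P l g" unfolding Unorm_def by (rule onorm_mv_nonneg)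
lemma Wnorm_nonneg: "0 \<le> Wnorm P l g" unfolding Wnorm_def by (simp add: onorm_mv_nonneg)

lemma pre_le_Gs:
  assumes wb: "\<And>j. \<bar>wx $ j\<bar> \<le> Wrow P xmax l g $ j" and hb: "\<And>m. \<bar>h $ m\<bar> \<le> e"
  shows "(wx + Uh P l g *v h + bh P l g) $ j \<le> Gs P xmax l g e"
proof -
  have "(wx + Uh P l g *v h + bh P l g) $ j \<le> (Wrow P xmax l g + e *\<^sub>R absrow (Uh P l g) + bh P l g) $ j"
    using wb[of j] mv_abs[OF hb, of "Uh P l g" j] by simp
  also have "\<dots> \<le> \<bar>posp (Wrow P xmax l g + e *\<^sub>R absrow (Uh P l g) + bh P l g) $ j\<bar>"
    unfolding posp_def by simp
  also have "\<dots> \<le> Gs P xmax l g e" unfolding Gs_def by (rule ninf_ge)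
  finally show ?thesis .
qed

lemma pre_abs_le_Gcc:
  assumes wb: "\<And>j. \<bar>wx $ j\<bar> \<le> Wrow P xmax l Gc $ j" and hb: "\<And>m. \<bar>h $ m\<bar> \<le> e"
  shows "\<bar>(wx + Uh P l Gc *v h + bh P l Gc) $ j\<bar> \<le> Gcc P xmax l e"
proof -
  have "\<bar>(wx + Uh P l Gc *v h + bh P l Gc) $ j\<bar> \<le> \<bar>wx $ j\<bar> + \<bar>(Uh P l Gc *v h) $ j\<bar> + \<bar>bh P l Gc $ j\<bar>"
    by (simp add: abs_triangle_ineq order_trans[OF abs_triangle_ineq])
  also have "\<dots> \<le> (Wrow P xmax l Gc + e *\<^sub>R absrow (Uh P l Gc) + vabs (bh P l Gc)) $ j"
    using wb[of j] mv_abs[OF hb, of "Uh P l Gc" j] by (simp add: vabs_def)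
  also have "\<dots> \<le> \<bar>(Wrow P xmax l Gc + e *\<^sub>R absrow (Uh P l Gc) + vabs (bh P l Gc)) $ j\<bar>" by simp
  also have "\<dots> \<le> Gcc P xmax l e" unfolding Gcc_def by (rule ninf_ge)
  finally show ?thesis .
qed

lemma cell_fst: "fst (cell P l wx s) $ j = sigm ((wx Gf + Uh P l Gf *v snd s + bh P l Gf) $ j) * fst s $ j
    + sigm ((wx Gi + Uh P l Gi *v snd s + bh P l Gi) $ j) * tanh ((wx Gc + Uh P l Gc *v snd s + bh P l Gc) $ j)"
  by (simp add: cell_def Let_def)

lemma cell_snd: "snd (cell P l wx s) $ j = sigm ((wx Go + Uh P l Go *v snd s + bh P l Go) $ j) * tanh (fst (cell P l wx s) $ j)"
  by (simp add: cell_def Let_def)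

lemma cell_snd_le1: "\<bar>snd (cell P l wx s) $ j\<bar> \<le> 1"
proof -
  have "\<bar>snd (cell P l wx s) $ j\<bar> \<le> 1 * 1" unfolding cell_snd abs_mult
    using sigm_pos sigm_lt1 tanh_abs_le1 by (intro mult_mono) (auto simp: less_imp_le)
  thus ?thesis by simp
qed

lemma Sset_D:
  assumes "s \<in> Sset P xmax l k" "xmax \<ge> 0"
  shows "\<And>j. \<bar>fst s $ j\<bar> \<le> cbar P xmax l k" "\<And>j. \<bar>snd s $ j\<bar> \<le> etap P xmax l k"
proof -
  obtain c h where s: "s = (c, h)" by fastforce
  show "\<And>j. \<bar>fst s $ j\<bar> \<le> cbar P xmax l k" using assms s unfolding Sset_def
    by (auto intro: order_trans[OF ninf_ge])
  fix j
  have "\<bar>snd s $ j\<bar> \<le> etap P xmax l (Suc k)" using assms s unfolding Sset_def etap_Suc'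
    by (auto intro: order_trans[OF ninf_ge])
  thus "\<bar>snd s $ j\<bar> \<le> etap P xmax l k" using etap_decr[OF assms(2), of P l k] by linarith
qed

lemma gate_bounds:
  assumes wb: "\<And>g j. \<bar>wx g $ j\<bar> \<le> Wrow P xmax l g $ j"
    and hb: "\<And>m. \<bar>h $ m\<bar> \<le> etap P xmax l k"
  shows "sigm ((wx g + Uh P l g *v h + bh P l g) $ j) \<le> sigbar P xmax l g k"
    and "\<bar>tanh ((wx Gc + Uh P l Gc *v h + bh P l Gc) $ j)\<bar> \<le> phibar P xmax l k"
  unfolding sigbar_def phibar_def
  by (rule sigm_mono, rule pre_le_Gs[OF wb hb]) (rule abs_tanh_le, rule pre_abs_le_Gcc[OF wb hb])

lemma cell_S:
  assumes x: "xmax \<ge> 0" and s: "s \<in> Sset P xmax l k"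
    and wb: "\<And>g j. \<bar>wx g $ j\<bar> \<le> Wrow P xmax l g $ j"
  shows "cell P l wx s \<in> Sset P xmax l k"
proof -
  note cb = Sset_D(1)[OF s x] and hb = Sset_D(2)[OF s x]
  note gb = gate_bounds[OF wb hb]
  have c: "\<bar>fst (cell P l wx s) $ j\<bar> \<le> cbar P xmax l k" for j
  proof -
    have "\<bar>fst (cell P l wx s) $ j\<bar> \<le> sigbar P xmax l Gf k * cbar P xmax l k + sigbar P xmax l Gi k * phibar P xmax l k"
      unfolding cell_fst
      by (rule order_trans[OF abs_triangle_ineq], unfold abs_mult, rule add_mono; rule mult_mono)
         (use gb cb sigm_nonneg sigbar_nonneg cbar_nonneg phibar_nonneg in \<open>auto\<close>)
    thus ?thesis using cbar_fix[of P xmax l k] by simp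
  qed
  have h: "\<bar>snd (cell P l wx s) $ j\<bar> \<le> tanh (cbar P xmax l k) * sigbar P xmax l Go k" for j
  proof -
    have "\<bar>snd (cell P l wx s) $ j\<bar> \<le> sigbar P xmax l Go k * tanh (cbar P xmax l k)"
      unfolding cell_snd abs_mult
      by (rule mult_mono) (use gb abs_tanh_le[OF c[of j]] sigbar_nonneg sigm_nonneg cbar_nonneg in \<open>auto\<close>)
    thus ?thesis by (simp add: mult.commute)
  qed
  show ?thesis unfolding Sset_def
    using ninf_le[OF c] ninf_le[OF h] by (cases "cell P l wx s") auto
qed

(* ---- part P4 ---- *)
lemma prod_diff:
  fixes a1 a2 x1 x2 :: real
  assumes "0 \<le> a1" "a1 \<le> A" "\<bar>x2\<bar> \<le> X"
  shows "\<bar>a1*x1 - a2*x2\<bar> \<le> A*\<bar>x1-x2\<bar> + \<bar>a1-a2\<bar>*X"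
proof -
  have "a1*x1 - a2*x2 = a1*(x1-x2) + (a1-a2)*x2" by (simp add: algebra_simps)
  hence "\<bar>a1*x1 - a2*x2\<bar> \<le> \<bar>a1\<bar>*\<bar>x1-x2\<bar> + \<bar>a1-a2\<bar>*\<bar>x2\<bar>"
    by (metis abs_mult abs_triangle_ineq)
  also have "\<dots> \<le> A*\<bar>x1-x2\<bar> + \<bar>a1-a2\<bar>*X"
    using assms by (intro add_mono mult_mono) auto
  finally show ?thesis .
qed

lemma cell_lip:
  fixes P :: "('x::finite, 'c::finite) lstm"
  assumes x: "xmax \<ge> 0" and s1: "s1 \<in> Sset P xmax l k" and s2: "s2 \<in> Sset P xmax l k"
    and wb1: "\<And>g j. \<bar>wx1 g $ j\<bar> \<le> Wrow P xmax l g $ j"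
    and wb2: "\<And>g j. \<bar>wx2 g $ j\<bar> \<le> Wrow P xmax l g $ j"
    and wd: "\<And>g. norm (wx1 g - wx2 g) \<le> Wnorm P l g * d" and d: "0 \<le> d"
  shows "norm (fst (cell P l wx1 s1) - fst (cell P l wx2 s2))
           \<le> sigbar P xmax l Gf k * norm (fst s1 - fst s2) + alpha_s P xmax l k * norm (snd s1 - snd s2)
             + alpha_x P xmax l k * d"
    and "norm (snd (cell P l wx1 s1) - snd (cell P l wx2 s2))
           \<le> sigbar P xmax l Go k * sigbar P xmax l Gf k * norm (fst s1 - fst s2)
             + (alpha_s P xmax l k * sigbar P xmax l Go k + 1/4 * tanh (cbar P xmax l k) * Unorm P l Go) * norm (snd s1 - snd s2)
             + (alpha_x P xmax l k * sigbar P xmax l Go k + 1/4 * tanh (cbar P xmax l k) * Wnorm P l Go) * d"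
proof -
  define sf where "sf = sigbar P xmax l Gf k"
  define si where "si = sigbar P xmax l Gi k"
  define so where "so = sigbar P xmax l Go k"
  define cb where "cb = cbar P xmax l k"
  define ph where "ph = phibar P xmax l k"
  define dc where "dc = norm (fst s1 - fst s2)"
  define dh where "dh = norm (snd s1 - snd s2)"
  define p1 where "p1 g = wx1 g + Uh P l g *v snd s1 + bh P l g" for g
  define p2 where "p2 g = wx2 g + Uh P l g *v snd s2 + bh P l g" for g
  have dp: "norm (p1 g - p2 g) \<le> Wnorm P l g * d + Unorm P l g * dh" for g
  proof -
    have "p1 g - p2 g = (wx1 g - wx2 g) + Uh P l g *v (snd s1 - snd s2)"
      unfolding p1_def p2_def by (simp add: matrix_vector_mult_diff_distrib algebra_simps)
    hence "norm (p1 g - p2 g) \<le> norm (wx1 g - wx2 g) + norm (Uh P l g *v (snd s1 - snd s2))"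
      by (simp add: norm_triangle_ineq)
    also have "\<dots> \<le> Wnorm P l g * d + Unorm P l g * dh"
      unfolding dh_def Unorm_def by (intro add_mono wd onorm_mv)
    finally show ?thesis .
  qed
  note gb1 = gate_bounds[OF wb1 Sset_D(2)[OF s1 x]]
  note gb2 = gate_bounds[OF wb2 Sset_D(2)[OF s2 x]]
  note cb2 = Sset_D(1)[OF s2 x]
  have sl: "\<bar>sigm a - sigm b\<bar> \<le> 1/4 * \<bar>(a - b)\<bar>" for a b by (rule sigm_lip)
  have tl: "\<bar>tanh a - tanh b\<bar> \<le> \<bar>(a - b)\<bar>" for a b :: real using tanh_lip[of a b] by simp
  have compc: "\<bar>(fst (cell P l wx1 s1) - fst (cell P l wx2 s2)) $ j\<bar>
     \<le> sf * \<bar>(fst s1 - fst s2) $ j\<bar> + cb/4 * \<bar>(p1 Gf - p2 Gf) $ j\<bar> + si * \<bar>(p1 Gc - p2 Gc) $ j\<bar>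
       + ph/4 * \<bar>(p1 Gi - p2 Gi) $ j\<bar>" for j
  proof -
    have e: "fst (cell P l wx1 s1) $ j - fst (cell P l wx2 s2) $ j =
      (sigm (p1 Gf $ j) * fst s1 $ j - sigm (p2 Gf $ j) * fst s2 $ j)
      + (sigm (p1 Gi $ j) * tanh (p1 Gc $ j) - sigm (p2 Gi $ j) * tanh (p2 Gc $ j))"
      unfolding p1_def p2_def by (simp add: cell_fst)
    have a: "\<bar>sigm (p1 Gf $ j) * fst s1 $ j - sigm (p2 Gf $ j) * fst s2 $ j\<bar>
        \<le> sf * \<bar>fst s1 $ j - fst s2 $ j\<bar> + \<bar>sigm (p1 Gf $ j) - sigm (p2 Gf $ j)\<bar> * cb"
      by (rule prod_diff) (use sigm_nonneg gb1 cb2 in \<open>auto simp: sf_def cb_def p1_def\<close>)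
    have b: "\<bar>sigm (p1 Gi $ j) * tanh (p1 Gc $ j) - sigm (p2 Gi $ j) * tanh (p2 Gc $ j)\<bar>
        \<le> si * \<bar>tanh (p1 Gc $ j) - tanh (p2 Gc $ j)\<bar> + \<bar>sigm (p1 Gi $ j) - sigm (p2 Gi $ j)\<bar> * ph"
      by (rule prod_diff) (use sigm_nonneg gb1 gb2 in \<open>auto simp: si_def ph_def p1_def p2_def\<close>)
    have "\<bar>sigm (p1 Gf $ j) - sigm (p2 Gf $ j)\<bar> * cb \<le> cb/4 * \<bar>p1 Gf $ j - p2 Gf $ j\<bar>"
      using mult_right_mono[OF sl[of "p1 Gf $ j" "p2 Gf $ j"], of cb] cb_def cbar_nonneg[of P xmax l k] by (simp add: algebra_simps)
    moreover have "\<bar>sigm (p1 Gi $ j) - sigm (p2 Gi $ j)\<bar> * ph \<le> ph/4 * \<bar>p1 Gi $ j - p2 Gi $ j\<bar>"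
      using mult_right_mono[OF sl[of "p1 Gi $ j" "p2 Gi $ j"], of ph] ph_def phibar_nonneg[of P xmax l k] by (simp add: algebra_simps)
    moreover have "si * \<bar>tanh (p1 Gc $ j) - tanh (p2 Gc $ j)\<bar> \<le> si * \<bar>p1 Gc $ j - p2 Gc $ j\<bar>"
      using mult_left_mono[OF tl[of "p1 Gc $ j" "p2 Gc $ j"] sigbar_nonneg[of P xmax l Gi k]] si_def by simp
    moreover note abs_triangle_ineq[of "sigm (p1 Gf $ j) * fst s1 $ j - sigm (p2 Gf $ j) * fst s2 $ j"
       "sigm (p1 Gi $ j) * tanh (p1 Gc $ j) - sigm (p2 Gi $ j) * tanh (p2 Gc $ j)"]
    ultimately show ?thesis using a b unfolding vector_minus_component e by linarith
  qed
  have C: "norm (fst (cell P l wx1 s1) - fst (cell P l wx2 s2)) \<le> sf * dc + alpha_s P xmax l k * dh + alpha_x P xmax l k * d"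
  proof -
    have "norm (fst (cell P l wx1 s1) - fst (cell P l wx2 s2))
       \<le> sf * dc + cb/4 * norm (p1 Gf - p2 Gf) + si * norm (p1 Gc - p2 Gc) + ph/4 * norm (p1 Gi - p2 Gi)"
      unfolding dc_def
      by (rule vec_bound4[OF compc]) (auto simp: sf_def cb_def si_def ph_def sigbar_nonneg cbar_nonneg phibar_nonneg)
    also have "\<dots> \<le> sf * dc + cb/4 * (Wnorm P l Gf * d + Unorm P l Gf * dh) + si * (Wnorm P l Gc * d + Unorm P l Gc * dh)
        + ph/4 * (Wnorm P l Gi * d + Unorm P l Gi * dh)"
      by (intro add_mono mult_left_mono dp order_refl) (auto simp: sf_def cb_def si_def ph_def sigbar_nonneg cbar_nonneg phibar_nonneg)
    also have "\<dots> = sf * dc + alpha_s P xmax l k * dh + alpha_x P xmax l k * d"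
      unfolding alpha_s_def alpha_x_def cb_def si_def ph_def by (simp add: algebra_simps)
    finally show ?thesis .
  qed
  have c2': "\<bar>fst (cell P l wx2 s2) $ j\<bar> \<le> cb" for j
    using Sset_D(1)[OF cell_S[OF x s2 wb2] x] cb_def by blast
  have comph: "\<bar>(snd (cell P l wx1 s1) - snd (cell P l wx2 s2)) $ j\<bar>
     \<le> so * \<bar>(fst (cell P l wx1 s1) - fst (cell P l wx2 s2)) $ j\<bar> + tanh cb / 4 * \<bar>(p1 Go - p2 Go) $ j\<bar>
       + 0 * \<bar>(0::real^'c) $ j\<bar> + 0 * \<bar>(0::real^'c) $ j\<bar>" for j
  proof -
    have e: "snd (cell P l wx1 s1) $ j - snd (cell P l wx2 s2) $ j =
      sigm (p1 Go $ j) * tanh (fst (cell P l wx1 s1) $ j) - sigm (p2 Go $ j) * tanh (fst (cell P l wx2 s2) $ j)"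
      unfolding p1_def p2_def by (simp add: cell_snd)
    have a: "\<bar>sigm (p1 Go $ j) * tanh (fst (cell P l wx1 s1) $ j) - sigm (p2 Go $ j) * tanh (fst (cell P l wx2 s2) $ j)\<bar>
       \<le> so * \<bar>tanh (fst (cell P l wx1 s1) $ j) - tanh (fst (cell P l wx2 s2) $ j)\<bar> + \<bar>sigm (p1 Go $ j) - sigm (p2 Go $ j)\<bar> * tanh cb"
      by (rule prod_diff) (use sigm_nonneg gb1 abs_tanh_le[OF c2'] in \<open>auto simp: so_def p1_def\<close>)
    have "\<bar>sigm (p1 Go $ j) - sigm (p2 Go $ j)\<bar> * tanh cb \<le> tanh cb / 4 * \<bar>p1 Go $ j - p2 Go $ j\<bar>"
      using mult_right_mono[OF sl[of "p1 Go $ j" "p2 Go $ j"], of "tanh cb"] cb_def cbar_nonneg[of P xmax l k] by (simp add: algebra_simps)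
    moreover have "so * \<bar>tanh (fst (cell P l wx1 s1) $ j) - tanh (fst (cell P l wx2 s2) $ j)\<bar>
        \<le> so * \<bar>fst (cell P l wx1 s1) $ j - fst (cell P l wx2 s2) $ j\<bar>"
      using mult_left_mono[OF tl sigbar_nonneg[of P xmax l Go k]] so_def by simp
    ultimately show ?thesis using a unfolding vector_minus_component e by linarith
  qed
  have "norm (snd (cell P l wx1 s1) - snd (cell P l wx2 s2))
      \<le> so * norm (fst (cell P l wx1 s1) - fst (cell P l wx2 s2)) + tanh cb / 4 * norm (p1 Go - p2 Go)
        + 0 * norm (0::real^'c) + 0 * norm (0::real^'c)"
    by (rule vec_bound4[OF comph]) (auto simp: so_def cb_def sigbar_nonneg cbar_nonneg)
  also have "\<dots> \<le> so * (sf * dc + alpha_s P xmax l k * dh + alpha_x P xmax l k * d)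
      + tanh cb / 4 * (Wnorm P l Go * d + Unorm P l Go * dh)"
    using mult_left_mono[OF dp[of Go], of "tanh cb / 4"] mult_left_mono[OF C, of so] cbar_nonneg[of P xmax l k]
    by (simp add: so_def cb_def sigbar_nonneg)
  also have "\<dots> = so * sf * dc
             + (alpha_s P xmax l k * so + 1/4 * tanh cb * Unorm P l Go) * dh
             + (alpha_x P xmax l k * so + 1/4 * tanh cb * Wnorm P l Go) * d"
    by (simp add: algebra_simps)
  finally show "norm (snd (cell P l wx1 s1) - snd (cell P l wx2 s2))
           \<le> sigbar P xmax l Go k * sigbar P xmax l Gf k * norm (fst s1 - fst s2)
             + (alpha_s P xmax l k * sigbar P xmax l Go k + 1/4 * tanh (cbar P xmax l k) * Unorm P l Go) * norm (snd s1 - snd s2)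
             + (alpha_x P xmax l k * sigbar P xmax l Go k + 1/4 * tanh (cbar P xmax l k) * Wnorm P l Go) * d"
    unfolding so_def sf_def cb_def dc_def dh_def .
  show "norm (fst (cell P l wx1 s1) - fst (cell P l wx2 s2))
           \<le> sigbar P xmax l Gf k * norm (fst s1 - fst s2) + alpha_s P xmax l k * norm (snd s1 - snd s2)
             + alpha_x P xmax l k * d" using C unfolding sf_def dc_def dh_def .
qed

(* ---- part P6a ---- *)
lemma norm_sq_vec_complex: "complex_of_real ((norm (z::complex^'n::finite))^2) = (\<Sum>i\<in>UNIV. z$i * cnj (z$i))"
proof -
  have "(norm z)^2 = (\<Sum>i\<in>UNIV. (norm (z$i))^2)"
    unfolding norm_vec_def L2_set_def by (simp add: sum_nonneg)
  hence "complex_of_real ((norm z)^2) = (\<Sum>i\<in>UNIV. complex_of_real ((norm (z$i))^2))"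
    by (simp only: of_real_sum)
  also have "\<dots> = (\<Sum>i\<in>UNIV. z$i * cnj (z$i))" by (simp only: complex_norm_square)
  finally show ?thesis .
qed

lemma unitary_norm:
  fixes U :: "complex^'n::finite^'n"
  assumes u: "cadj U ** U = mat 1"
  shows "norm (U *v w) = norm w"
proof -
  have uu: "(\<Sum>i\<in>UNIV. cnj (U$i$k) * U$i$j) = (if k = j then 1 else 0)" for j k
    using arg_cong[OF u, of "\<lambda>M. M $ k $ j"] by (simp add: matrix_matrix_mult_def cadj_def mat_def)
  have "(\<Sum>i\<in>UNIV. (U *v w)$i * cnj ((U *v w)$i))
      = (\<Sum>i\<in>UNIV. \<Sum>k\<in>UNIV. \<Sum>j\<in>UNIV. w $ j * (cnj (w $ k) * (U $ i $ j * cnj (U $ i $ k))))"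
    by (simp add: matrix_vector_mult_def sum_distrib_left sum_distrib_right cnj_sum algebra_simps)
  also have "\<dots> = (\<Sum>k\<in>UNIV. \<Sum>i\<in>UNIV. \<Sum>j\<in>UNIV. w $ j * (cnj (w $ k) * (U $ i $ j * cnj (U $ i $ k))))"
    by (rule sum.swap)
  also have "\<dots> = (\<Sum>k\<in>UNIV. \<Sum>j\<in>UNIV. \<Sum>i\<in>UNIV. w $ j * (cnj (w $ k) * (U $ i $ j * cnj (U $ i $ k))))"
    by (rule sum.cong[OF refl], rule sum.swap)
  also have "\<dots> = (\<Sum>k\<in>UNIV. \<Sum>j\<in>UNIV. w$j * cnj (w$k) * (\<Sum>i\<in>UNIV. cnj (U$i$k) * U$i$j))"
    by (simp add: sum_distrib_left algebra_simps)
  also have "\<dots> = (\<Sum>j\<in>UNIV. w$j * cnj (w$j))"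
    by (simp add: uu if_distrib sum.delta' cong: if_cong)
  finally have "complex_of_real ((norm (U *v w))^2) = complex_of_real ((norm w)^2)"
    by (simp only: norm_sq_vec_complex)
  hence "(norm (U *v w))^2 = (norm w)^2" using of_real_eq_iff by blast
  thus ?thesis by (simp add: power2_eq_iff_nonneg)
qed

lemma cadj_cadj: "cadj (cadj U) = U" by (simp add: cadj_def vec_eq_iff)

definition cv :: "real^'n::finite \<Rightarrow> complex^'n" where "cv y = (\<chi> i. complex_of_real (y$i))"

lemma norm_cv: "norm (cv y) = norm y" unfolding norm_vec_def cv_def by simp

lemma cv_mv: "cmat A *v cv y = cv (A *v y)"
  by (simp add: cv_def cmat_def matrix_vector_mult_def vec_eq_iff)

fun Apow :: "real^'n::finite^'n \<Rightarrow> nat \<Rightarrow> real^'n \<Rightarrow> real^'n" where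
  "Apow A 0 y = y" | "Apow A (Suc s) y = A *v Apow A s y"

fun Cpow :: "complex^'n::finite^'n \<Rightarrow> nat \<Rightarrow> complex^'n \<Rightarrow> complex^'n" where
  "Cpow A 0 y = y" | "Cpow A (Suc s) y = A *v Cpow A s y"

lemma cv_Apow: "cv (Apow A s y) = Cpow (cmat A) s (cv y)"
proof (induction s)
  case (Suc s)
  have "Cpow (cmat A) (Suc s) (cv y) = cmat A *v cv (Apow A s y)" using Suc by simp
  also have "\<dots> = cv (Apow A (Suc s) y)" by (simp add: cv_mv)
  finally show ?case by simp
qed simp

lemma Cpow_conj:
  assumes u: "cadj U ** U = mat 1" and u2: "U ** cadj U = mat 1" and M: "M = U ** T ** cadj U"
  shows "Cpow M s z = U *v Cpow T s (cadj U *v z)"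
proof (induction s)
  case 0
  have "U *v (cadj U *v z) = z" using u2 by (simp add: matrix_vector_mul_assoc)
  thus ?case by simp
next
  case (Suc s)
  have "Cpow M (Suc s) z = M *v (U *v Cpow T s (cadj U *v z))" using Suc by simp
  also have "\<dots> = U *v (T *v ((cadj U ** U) *v Cpow T s (cadj U *v z)))"
    unfolding M by (simp add: matrix_vector_mul_assoc matrix_mul_assoc)
  also have "\<dots> = U *v Cpow T (Suc s) (cadj U *v z)" using u by simp
  finally show ?case .
qed

(* ---- part P7 ---- *)
definition Sg :: "real \<Rightarrow> nat \<Rightarrow> real" where "Sg r n = (\<Sum>j<n. r ^ j)"

lemma Sg_add: "Sg r (s + n) = Sg r s + r ^ s * Sg r n"
  unfolding Sg_def by (induction n) (auto simp: power_add algebra_simps)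

lemma Sg_geo: "(1 - r) * Sg r n = 1 - r ^ n"
proof (induction n)
  case 0 thus ?case by (simp add: Sg_def)
next
  case (Suc n)
  have "(1 - r) * Sg r (Suc n) = (1 - r) * Sg r n + (1 - r) * r ^ n" by (simp add: Sg_def algebra_simps)
  also have "\<dots> = 1 - r ^ Suc n" using Suc by (simp add: algebra_simps)
  finally show ?case .
qed

lemma Sg_nonneg: "0 \<le> r \<Longrightarrow> 0 \<le> Sg r n"
  unfolding Sg_def by (simp add: sum_nonneg)

lemma key_ineq_D:
  fixes p e A B b :: real
  assumes p: "0 \<le> p" "p \<le> 1" and e: "0 \<le> e" "e \<le> 1" and AB: "0 \<le> A" "0 \<le> B" and b: "0 \<le> b"
    and r: "0 \<le> r" and geA: "(1 - r) * A = 1 - p" and geB: "(1 - r) * B = 1 - e"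
  defines "c \<equiv> b * A" and "C \<equiv> b * (A + p * B)"
  defines "D \<equiv> p^2 * e^2 + C^2"
  shows "D * (1 + D - c^2 - p^2) \<ge> c^2"
proof -
  have cC: "c^2 \<le> C^2" unfolding c_def C_def using AB b p
    by (intro power_mono mult_left_mono) auto
  have p2: "p^2 \<le> 1" using p by (simp add: power_le_one)
  have e2: "e^2 \<le> 1" using e by (simp add: power_le_one)
  have split: "D * (1 + D - c^2 - p^2) = p^2*e^2*(1 - p^2 + p^2*e^2) + p^2*e^2*(C^2 - c^2)
      + C^2*(1 - p^2 + p^2*e^2) + C^2*(C^2 - c^2)"
    unfolding D_def by (simp add: algebra_simps)
  have t1: "0 \<le> p^2*e^2*(1 - p^2 + p^2*e^2)" using p2 by simp
  have t4: "0 \<le> C^2*(C^2 - c^2)" using cC by simp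
  \<comment> \<open>main polynomial inequality\<close>
  have m1: "A * p^2 * (1 + e) * B * (1 - p) \<le> A * (2 * p * (1 + p)) * B * (1 - p)"
  proof -
    have "p^2 * (1 + e) \<le> 2 * p * (1 + p)"
    proof -
      have "p * e \<le> 1" using p e by (intro mult_le_one) auto
      hence "p * (1 + e) \<le> 2 * (1 + p)" using p by (simp add: algebra_simps)
      hence "p * (p * (1 + e)) \<le> p * (2 * (1 + p))" using p by (intro mult_left_mono) auto
      thus ?thesis by (simp add: power2_eq_square algebra_simps)
    qed
    hence "A * (p^2 * (1 + e)) \<le> A * (2 * p * (1 + p))" using AB by (intro mult_left_mono) auto
    hence "(A * (p^2 * (1 + e))) * (B * (1 - p)) \<le> (A * (2 * p * (1 + p))) * (B * (1 - p))"
      using AB p by (intro mult_right_mono) auto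
    thus ?thesis by (simp add: algebra_simps)
  qed
  have lhs: "A^2 * p^2 * (1 - e^2) = A * p^2 * (1 + e) * B * (1 - p)"
  proof -
    have "1 - e^2 = (1 + e) * (1 - e)" by (simp add: power2_eq_square algebra_simps)
    also have "\<dots> = (1 + e) * ((1 - r) * B)" using geB by simp
    finally have q: "1 - e^2 = (1 + e) * ((1 - r) * B)" .
    have "A^2 * p^2 * (1 - e^2) = A * p^2 * (1 + e) * ((1 - r) * B) * A"
      unfolding q by (simp add: power2_eq_square algebra_simps)
    also have "\<dots> = A * p^2 * (1 + e) * B * ((1 - r) * A)" by (simp add: algebra_simps)
    finally show ?thesis using geA by simp
  qed
  have rhs: "2 * p * A * B * (1 - p^2) \<le> p * B * (2 * A + p * B) * (1 - p^2 + 2 * p^2 * e^2)"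
  proof -
    have "2 * A \<le> 2 * A + p * B" using p AB by simp
    moreover have "1 - p^2 \<le> 1 - p^2 + 2 * p^2 * e^2" by simp
    ultimately have "2 * A * (1 - p^2) \<le> (2 * A + p * B) * (1 - p^2 + 2 * p^2 * e^2)"
      using p2 AB p by (intro mult_mono) auto
    hence "(p * B) * (2 * A * (1 - p^2)) \<le> (p * B) * ((2 * A + p * B) * (1 - p^2 + 2 * p^2 * e^2))"
      using p AB by (intro mult_left_mono) auto
    thus ?thesis by (simp add: algebra_simps)
  qed
  have eq1: "2 * p * A * B * (1 - p^2) = A * (2 * p * (1 + p)) * B * (1 - p)"
    by (simp add: power2_eq_square algebra_simps)
  have poly: "A^2 * (1 + p^2*e^2) \<le> (A + p*B)^2 * (1 - p^2 + 2*p^2*e^2)"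
  proof -
    have "(A + p*B)^2 * (1 - p^2 + 2*p^2*e^2) - A^2 * (1 + p^2*e^2)
        = p * B * (2 * A + p * B) * (1 - p^2 + 2 * p^2 * e^2) - A^2 * p^2 * (1 - e^2)"
      by (simp add: power2_eq_square algebra_simps)
    moreover have "A^2 * p^2 * (1 - e^2) \<le> p * B * (2 * A + p * B) * (1 - p^2 + 2 * p^2 * e^2)"
      using lhs m1 eq1 rhs by linarith
    ultimately show ?thesis by linarith
  qed
  have cc: "c^2 = b^2 * A^2" "C^2 = b^2 * (A + p*B)^2" unfolding c_def C_def by (simp_all add: power_mult_distrib)
  have "c^2 * (1 + p^2*e^2) \<le> C^2 * (1 - p^2 + 2*p^2*e^2)"
    unfolding cc using mult_left_mono[OF poly, of "b^2"] by (simp add: mult.assoc)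
  hence "c^2 \<le> C^2*(1 - p^2 + p^2*e^2) + p^2*e^2*(C^2 - c^2)" by (simp add: algebra_simps)
  thus ?thesis using split t1 t4 by linarith
qed

lemma quad_psd:
  fixes D c q X Y :: real
  assumes D: "0 \<le> D" and key: "D * (1 + D - c^2 - q) \<ge> c^2" and cz: "D = 0 \<Longrightarrow> c = 0" and q: "q \<le> 1"
  shows "(X + c*Y)^2 + q * Y^2 \<le> (1 + D) * (X^2 + Y^2)"
proof (cases "D = 0")
  case True
  have "q * Y^2 \<le> 1 * Y^2" using q by (intro mult_right_mono) auto
  thus ?thesis using True cz by simp
next
  case False
  hence Dp: "D > 0" using D by simp
  have "D * ((1 + D) * (X^2 + Y^2) - (X + c*Y)^2 - q * Y^2) = (D*X - c*Y)^2 + (D * (1 + D - c^2 - q) - c^2) * Y^2"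
    by (simp add: power2_eq_square algebra_simps)
  also have "\<dots> \<ge> 0" using key by simp
  finally have "0 \<le> D * ((1 + D) * (X^2 + Y^2) - (X + c*Y)^2 - q * Y^2)" .
  hence "0 \<le> (1 + D) * (X^2 + Y^2) - (X + c*Y)^2 - q * Y^2" using Dp by (simp add: zero_le_mult_iff)
  thus ?thesis by simp
qed

lemma key_op:
  fixes r b X Y :: real
  assumes r: "0 \<le> r" "r \<le> 1" and b: "0 \<le> b" and st: "s \<le> t"
  shows "(X + b * Sg r s * Y)^2 + (r^s)^2 * Y^2 \<le> (1 + r^(2*t) + b^2 * (Sg r t)^2) * (X^2 + Y^2)"
proof (cases "s = t")
  case True
  have "(X + b * Sg r t * Y)^2 \<le> (1 + (b * Sg r t)^2) * (X^2 + Y^2)"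
  proof -
    have "(1 + (b * Sg r t)^2) * (X^2 + Y^2) - (X + b * Sg r t * Y)^2 = (b * Sg r t * X - Y)^2"
      by (simp add: power2_eq_square algebra_simps)
    thus ?thesis by (metis diff_ge_0_iff_ge zero_le_power2)
  qed
  moreover have "(r^t)^2 * Y^2 \<le> r^(2*t) * (X^2 + Y^2)"
  proof -
    have "(r^t)^2 = r^(2*t)" by (simp add: power_mult[symmetric] mult.commute)
    moreover have "r^(2*t) * Y^2 \<le> r^(2*t) * (X^2 + Y^2)" using r by (intro mult_left_mono) auto
    ultimately show ?thesis by simp
  qed
  ultimately show ?thesis using True by (simp add: power_mult_distrib algebra_simps)
next
  case False
  hence "s < t" using st by simp
  define n where "n = t - s"
  have n: "t = s + n" unfolding n_def using st by simp
  define p where "p = r^s"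
  define e where "e = r^n"
  define A where "A = Sg r s"
  define B where "B = Sg r n"
  have p: "0 \<le> p" "p \<le> 1" unfolding p_def using r by (simp_all add: power_le_one)
  have e: "0 \<le> e" "e \<le> 1" unfolding e_def using r by (simp_all add: power_le_one)
  have AB: "0 \<le> A" "0 \<le> B" unfolding A_def B_def using r Sg_nonneg by auto
  have St: "Sg r t = A + p * B" unfolding n A_def B_def p_def by (rule Sg_add)
  have rt: "r^(2*t) = p^2 * e^2" unfolding n p_def e_def by (simp add: power_add power_mult power2_eq_square algebra_simps)
  have key: "(p^2 * e^2 + (b * (A + p * B))^2) * (1 + (p^2 * e^2 + (b * (A + p * B))^2) - (b * A)^2 - p^2) \<ge> (b*A)^2"
    by (rule key_ineq_D[OF p e AB b r(1)]) (simp_all add: A_def B_def p_def e_def Sg_geo)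
  have cz: "b * A = 0" if "p^2 * e^2 + (b * (A + p * B))^2 = 0"
  proof -
    have "b * (A + p * B) = 0" using that by (metis add_nonneg_eq_0_iff zero_le_power2 power_eq_0_iff zero_le_mult_iff)
    moreover have "0 \<le> b * A" "0 \<le> b * (p * B)" using b AB p by simp_all
    ultimately show "b * A = 0" unfolding distrib_left by linarith
  qed
  have "(X + (b * A) * Y)^2 + p^2 * Y^2 \<le> (1 + (p^2 * e^2 + (b * (A + p * B))^2)) * (X^2 + Y^2)"
    by (rule quad_psd[OF _ key cz]) (use p in \<open>simp_all add: power_le_one\<close>)
  moreover have "(b * (A + p * B))^2 = b^2 * (A + p * B)^2" by (simp add: power_mult_distrib)
  ultimately show ?thesis unfolding St rt by (simp add: A_def p_def mult.assoc add.assoc)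
qed

(* ---- part P6b ---- *)
lemma two_ne_one: "(2::2) \<noteq> 1" by simp

lemma mat2_mv1: "(mat2 a b c d *v v) $ 1 = a * v$1 + b * v$2"
  by (simp add: mat2_def matrix_vector_mult_def sum_2)
lemma mat2_mv2: "(mat2 a b c d *v v) $ 2 = c * v$1 + d * v$2"
  by (simp add: mat2_def matrix_vector_mult_def sum_2)

fun sgf :: "real \<Rightarrow> real \<Rightarrow> nat \<Rightarrow> real" where
  "sgf l1 l2 0 = 0" | "sgf l1 l2 (Suc s) = l1 * sgf l1 l2 s + l2 ^ s"

lemma Cpow_T:
  "Cpow (mat2 (complex_of_real l1) nu 0 (complex_of_real l2)) s w $ 1
     = complex_of_real (l1^s) * w$1 + nu * complex_of_real (sgf l1 l2 s) * w$2
   \<and> Cpow (mat2 (complex_of_real l1) nu 0 (complex_of_real l2)) s w $ 2 = complex_of_real (l2^s) * w$2"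
proof (induction s)
  case 0 thus ?case by simp
next
  case (Suc s)
  thus ?case by (simp add: mat2_mv1 mat2_mv2 algebra_simps)
qed

lemma sgf_bound:
  assumes l1: "l1 > 0" and l2: "\<bar>l2\<bar> \<le> l1"
  shows "l1 * \<bar>sgf l1 l2 s\<bar> \<le> l1^s * Sg (\<bar>l2\<bar>/l1) s"
proof (induction s)
  case 0 thus ?case by (simp add: Sg_def)
next
  case (Suc s)
  have "l1 * \<bar>sgf l1 l2 (Suc s)\<bar> \<le> l1 * (l1 * \<bar>sgf l1 l2 s\<bar> + \<bar>l2\<bar>^s)"
    using l1 by (intro mult_left_mono) (auto simp: abs_mult power_abs intro: order_trans[OF abs_triangle_ineq])
  also have "\<dots> \<le> l1 * (l1^s * Sg (\<bar>l2\<bar>/l1) s + \<bar>l2\<bar>^s)"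
    using Suc l1 by (intro mult_left_mono add_mono) auto
  also have "\<dots> = l1^(Suc s) * Sg (\<bar>l2\<bar>/l1) (Suc s)"
    using l1 by (simp add: Sg_def power_divide algebra_simps)
  finally show ?case .
qed

lemma norm_vec2: "norm (v::'a::real_normed_vector^2) = sqrt ((norm (v$1))^2 + (norm (v$2))^2)"
  unfolding norm_vec_def L2_set_def by (simp add: sum_2)

lemma Tpow_bound:
  assumes l1: "l1 > 0" and l2: "\<bar>l2\<bar> \<le> l1" and st: "s \<le> t"
  shows "norm (Cpow (mat2 (complex_of_real l1) nu 0 (complex_of_real l2)) s w)
           \<le> mu l1 l2 nu t * l1^s * norm w"
proof -
  define r where "r = \<bar>l2\<bar>/l1"
  define b where "b = cmod nu / l1"
  define X where "X = cmod (w$1)"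
  define Y where "Y = cmod (w$2)"
  define v where "v = Cpow (mat2 (complex_of_real l1) nu 0 (complex_of_real l2)) s w"
  have r: "0 \<le> r" "r \<le> 1" unfolding r_def using l1 l2 by auto
  have b: "0 \<le> b" unfolding b_def using l1 by simp
  have XY: "0 \<le> X" "0 \<le> Y" unfolding X_def Y_def by auto
  have v1: "cmod (v$1) \<le> l1^s * (X + b * Sg r s * Y)"
  proof -
    have "cmod (v$1) \<le> l1^s * X + cmod nu * \<bar>sgf l1 l2 s\<bar> * Y"
      unfolding v_def X_def Y_def using Cpow_T[of l1 nu l2 s w] l1
      by (auto simp: norm_mult abs_mult norm_power intro!: order_trans[OF norm_triangle_ineq])
    also have "cmod nu * \<bar>sgf l1 l2 s\<bar> = b * (l1 * \<bar>sgf l1 l2 s\<bar>)" unfolding b_def using l1 by simp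
    also have "\<dots> \<le> b * (l1^s * Sg r s)" unfolding r_def using sgf_bound[OF l1 l2] b by (intro mult_left_mono) auto
    finally have "cmod (v$1) \<le> l1^s * X + b * (l1^s * Sg r s) * Y" using XY by (simp add: mult_right_mono)
    thus ?thesis by (simp add: algebra_simps)
  qed
  have v2: "cmod (v$2) = l1^s * (r^s * Y)"
    unfolding v_def Y_def r_def using Cpow_T[of l1 nu l2 s w] l1 by (simp add: norm_mult power_divide power_abs norm_power)
  have "(norm v)^2 = (cmod (v$1))^2 + (cmod (v$2))^2" by (simp add: norm_vec2)
  also have "\<dots> \<le> (l1^s * (X + b * Sg r s * Y))^2 + (l1^s * (r^s * Y))^2"
    using v1 v2 by (auto intro!: power_mono)
  also have "\<dots> = (l1^s)^2 * ((X + b * Sg r s * Y)^2 + (r^s)^2 * Y^2)"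
    by (simp only: power_mult_distrib distrib_left[of "(l1^s)^2"])
  also have "\<dots> \<le> (l1^s)^2 * ((1 + r^(2*t) + b^2 * (Sg r t)^2) * (X^2 + Y^2))"
    by (intro mult_left_mono key_op r b st) auto
  also have "\<dots> = (mu l1 l2 nu t * l1^s * norm w)^2"
  proof -
    have "(norm w)^2 = X^2 + Y^2" unfolding X_def Y_def by (simp add: norm_vec2)
    moreover have "(mu l1 l2 nu t)^2 = 1 + r^(2*t) + b^2 * (Sg r t)^2"
      unfolding mu_def r_def b_def Sg_def using l1
      by (simp add: Let_def power_divide add_nonneg_nonneg sum_nonneg)
    ultimately show ?thesis by (simp add: power_mult_distrib)
  qed
  finally have "(norm v)^2 \<le> (mu l1 l2 nu t * l1^s * norm w)^2" .
  moreover have "0 \<le> mu l1 l2 nu t" unfolding mu_def Let_def by simp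
  hence "0 \<le> mu l1 l2 nu t * l1^s * norm w" using l1 by simp
  ultimately show ?thesis unfolding v_def using power2_le_imp_le by blast
qed

(* ---- part P5 ---- *)
lemma newst_snd_le1: "1 \<le> l \<Longrightarrow> \<bar>snd (newst P xv s l) $ j\<bar> \<le> 1"
proof (cases l)
  case (Suc m) thus ?thesis by (cases m) (simp_all add: cell_snd_le1)
qed simp

lemma wb1:
  assumes "\<And>j. \<bar>xv $ j\<bar> \<le> xmax"
  shows "\<bar>(Win P g *v xv) $ j\<bar> \<le> Wrow P xmax 1 g $ j"
  using mv_abs[of xv xmax "Win P g" j, OF assms] by (simp add: Wrow_def)

lemma wb2:
  assumes "\<And>j. \<bar>h $ j\<bar> \<le> 1" and "l \<noteq> 1"
  shows "\<bar>(Wh P l g *v h) $ j\<bar> \<le> Wrow P xmax l g $ j"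
  using mv_abs[of h 1 "Wh P l g" j, OF assms(1)] assms(2) by (simp add: Wrow_def)

lemma newst_S:
  assumes x: "xmax \<ge> 0" and l: "1 \<le> l" and s: "s l \<in> Sset P xmax l k" and xb: "\<And>j. \<bar>xv $ j\<bar> \<le> xmax"
  shows "newst P xv s l \<in> Sset P xmax l k"
proof (cases l)
  case 0 thus ?thesis using l by simp
next
  case (Suc m)
  show ?thesis
  proof (cases m)
    case 0
    hence e: "newst P xv s l = cell P 1 (\<lambda>g. Win P g *v xv) (s 1)" "l = 1" using Suc by simp_all
    have "cell P 1 (\<lambda>g. Win P g *v xv) (s 1) \<in> Sset P xmax 1 k"
      by (rule cell_S[OF x _ wb1[OF xb]]) (use s e in simp)
    thus ?thesis using e by simp
  next
    case (Suc m')
    have wb: "\<And>g j. \<bar>(Wh P l g *v snd (newst P xv s (Suc m'))) $ j\<bar> \<le> Wrow P xmax l g $ j"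
      using \<open>l = Suc m\<close> Suc newst_snd_le1[of "Suc m'"] by (intro wb2) auto
    have e: "newst P xv s l = cell P l (\<lambda>g. Wh P l g *v snd (newst P xv s (Suc m'))) (s l)"
      using \<open>l = Suc m\<close> Suc by simp
    show ?thesis unfolding e by (rule cell_S[OF x s wb])
  qed
qed

definition dlay :: "('x::finite, 'c::finite) lstm \<Rightarrow> real^'x \<Rightarrow> (nat \<Rightarrow> 'c lstate) \<Rightarrow> (nat \<Rightarrow> 'c lstate) \<Rightarrow> nat \<Rightarrow> real" where
  "dlay P xv s s' l = (if l = 1 then 0 else norm (snd (newst P xv s (l - 1)) - snd (newst P xv s' (l - 1))))"

lemma newst_lip:
  fixes P :: "('x::finite, 'c::finite) lstm"
  assumes x: "xmax \<ge> 0" and l: "1 \<le> l" and s: "s l \<in> Sset P xmax l k" and s': "s' l \<in> Sset P xmax l k"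
    and xb: "\<And>j. \<bar>xv $ j\<bar> \<le> xmax"
  shows "norm (fst (newst P xv s l) - fst (newst P xv s' l))
           \<le> sigbar P xmax l Gf k * norm (fst (s l) - fst (s' l)) + alpha_s P xmax l k * norm (snd (s l) - snd (s' l))
             + alpha_x P xmax l k * dlay P xv s s' l"
    and "norm (snd (newst P xv s l) - snd (newst P xv s' l))
           \<le> sigbar P xmax l Go k * sigbar P xmax l Gf k * norm (fst (s l) - fst (s' l))
             + (alpha_s P xmax l k * sigbar P xmax l Go k + 1/4 * tanh (cbar P xmax l k) * Unorm P l Go) * norm (snd (s l) - snd (s' l))
             + (alpha_x P xmax l k * sigbar P xmax l Go k + 1/4 * tanh (cbar P xmax l k) * Wnorm P l Go) * dlay P xv s s' l"
proof -
  have "(norm (fst (newst P xv s l) - fst (newst P xv s' l))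
           \<le> sigbar P xmax l Gf k * norm (fst (s l) - fst (s' l)) + alpha_s P xmax l k * norm (snd (s l) - snd (s' l))
             + alpha_x P xmax l k * dlay P xv s s' l) \<and>
        (norm (snd (newst P xv s l) - snd (newst P xv s' l))
           \<le> sigbar P xmax l Go k * sigbar P xmax l Gf k * norm (fst (s l) - fst (s' l))
             + (alpha_s P xmax l k * sigbar P xmax l Go k + 1/4 * tanh (cbar P xmax l k) * Unorm P l Go) * norm (snd (s l) - snd (s' l))
             + (alpha_x P xmax l k * sigbar P xmax l Go k + 1/4 * tanh (cbar P xmax l k) * Wnorm P l Go) * dlay P xv s s' l)"
  proof (cases l)
    case 0 thus ?thesis using l by simp
  next
    case (Suc m)
    show ?thesis
    proof (cases m)
      case 0
      have l1: "l = 1" using Suc 0 by simp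
      have wd: "norm ((\<lambda>g. Win P g *v xv) g - (\<lambda>g. Win P g *v xv) g) \<le> Wnorm P 1 g * 0" for g by simp
      show ?thesis using cell_lip[OF x s[unfolded l1] s'[unfolded l1] wb1[OF xb] wb1[OF xb] wd order_refl]
        unfolding l1 dlay_def by simp
    next
      case (Suc m')
      have lm: "l = Suc (Suc m')" using \<open>l = Suc m\<close> Suc by simp
      define h1 where "h1 = snd (newst P xv s (Suc m'))"
      define h2 where "h2 = snd (newst P xv s' (Suc m'))"
      have wbb: "\<And>g j. \<bar>(Wh P l g *v h) $ j\<bar> \<le> Wrow P xmax l g $ j" if "h = h1 \<or> h = h2" for h
        using that lm newst_snd_le1[of "Suc m'"] unfolding h1_def h2_def by (intro wb2) auto
      have wd: "norm ((\<lambda>g. Wh P l g *v h1) g - (\<lambda>g. Wh P l g *v h2) g) \<le> Wnorm P l g * norm (h1 - h2)" for g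
      proof -
        have "norm (Wh P l g *v h1 - Wh P l g *v h2) = norm (Wh P l g *v (h1 - h2))"
          by (simp add: matrix_vector_mult_diff_distrib)
        also have "\<dots> \<le> Wnorm P l g * norm (h1 - h2)" unfolding Wnorm_def using lm by (simp add: onorm_mv)
        finally show ?thesis by simp
      qed
      have dl: "dlay P xv s s' l = norm (h1 - h2)" unfolding dlay_def h1_def h2_def lm by simp
      have nl: "newst P xv s l = cell P l (\<lambda>g. Wh P l g *v h1) (s l)" "newst P xv s' l = cell P l (\<lambda>g. Wh P l g *v h2) (s' l)"
        unfolding h1_def h2_def lm by simp_all
      show ?thesis unfolding nl dl
        using cell_lip[OF x s s' wbb wbb wd norm_ge_zero] by simp
    qed
  qed
  thus "norm (fst (newst P xv s l) - fst (newst P xv s' l))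
           \<le> sigbar P xmax l Gf k * norm (fst (s l) - fst (s' l)) + alpha_s P xmax l k * norm (snd (s l) - snd (s' l))
             + alpha_x P xmax l k * dlay P xv s s' l"
    and "norm (snd (newst P xv s l) - snd (newst P xv s' l))
           \<le> sigbar P xmax l Go k * sigbar P xmax l Gf k * norm (fst (s l) - fst (s' l))
             + (alpha_s P xmax l k * sigbar P xmax l Go k + 1/4 * tanh (cbar P xmax l k) * Unorm P l Go) * norm (snd (s l) - snd (s' l))
             + (alpha_x P xmax l k * sigbar P xmax l Go k + 1/4 * tanh (cbar P xmax l k) * Wnorm P l Go) * dlay P xv s s' l"
    by auto
qed

definition Vd :: "'c::finite lstate \<Rightarrow> 'c lstate \<Rightarrow> real^2" where
  "Vd a b = (\<chi> i. if i = 1 then norm (fst a - fst b) else norm (snd a - snd b))"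

lemma norm_Vd: "norm (Vd a b) = norm (a - b)"
proof -
  have "a - b = (fst a - fst b, snd a - snd b)" by (metis fst_diff snd_diff prod.collapse)
  thus ?thesis by (simp add: norm_vec2 Vd_def norm_Pair)
qed

lemma Vd_nonneg: "0 \<le> Vd a b $ i" unfolding Vd_def by simp

lemma newst_Vd:
  fixes P :: "('x::finite, 'c::finite) lstm"
  assumes x: "xmax \<ge> 0" and l: "1 \<le> l" and s: "s l \<in> Sset P xmax l k" and s': "s' l \<in> Sset P xmax l k"
    and xb: "\<And>j. \<bar>xv $ j\<bar> \<le> xmax"
  shows "Vd (newst P xv s l) (newst P xv s' l) $ i
    \<le> (A_s P xmax l k *v Vd (s l) (s' l) + dlay P xv s s' l *\<^sub>R a_x P xmax l k) $ i"
  using newst_lip[where xv=xv and s=s and s'=s' and l=l, OF x l s s' xb] exhaust_2[of i]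
  by (auto simp: Vd_def A_s_def a_x_def mat2_mv1 mat2_mv2 algebra_simps)

lemma alpha_s_nonneg: "0 \<le> alpha_s P xmax l k"
  unfolding alpha_s_def
  by (intro add_nonneg_nonneg mult_nonneg_nonneg Unorm_nonneg cbar_nonneg sigbar_nonneg phibar_nonneg) auto

lemma A_s_nonneg: "0 \<le> A_s P xmax l k $ i $ j"
proof -
  have a: "0 \<le> alpha_s P xmax l k" by (rule alpha_s_nonneg)
  have t: "0 \<le> tanh (cbar P xmax l k)" using cbar_nonneg by simp
  show ?thesis unfolding A_s_def mat2_def
    using a t sigbar_nonneg[of P xmax l] Unorm_nonneg[of P l Go] by (auto intro!: add_nonneg_nonneg)
qed

lemma A_s_trace: "A_s P xmax l k $ 1 $ 1 + A_s P xmax l k $ 2 $ 2 > 0"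
proof -
  have a: "0 \<le> alpha_s P xmax l k" by (rule alpha_s_nonneg)
  have t: "0 \<le> tanh (cbar P xmax l k)" using cbar_nonneg by simp
  show ?thesis unfolding A_s_def mat2_def
    using a t sigbar_nonneg[of P xmax l Go k] sigbar_pos[of P xmax l Gf k] Unorm_nonneg[of P l Go]
    by (simp add: add_pos_nonneg)
qed

lemma mv_mono:
  assumes A: "\<And>i j. 0 \<le> (A::real^'n::finite^'m::finite) $ i $ j" and le: "\<And>i. x $ i \<le> y $ i"
  shows "(A *v x) $ i \<le> (A *v y) $ i"
  unfolding matrix_vector_mult_def using A le by (auto intro!: sum_mono mult_left_mono)

lemma Apow_add: "Apow A s (x + y) = Apow A s x + Apow A s y"
  by (induction s) (simp_all add: matrix_vector_right_distrib)
lemma Apow_scale: "Apow A s (c *\<^sub>R x) = c *\<^sub>R Apow A s x"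
  by (induction s) (simp_all add: matrix_vector_mult_scaleR)
lemma mv_sum: "(A::real^'n::finite^'m::finite) *v (\<Sum>\<sigma>\<in>S. f \<sigma>) = (\<Sum>\<sigma>\<in>S. A *v f \<sigma>)"
  using linear_sum[OF matrix_vector_mul_linear[of A], of f S] by (simp add: o_def)

lemma unroll:
  fixes A :: "real^2^2" and v :: "nat \<Rightarrow> real^2" and w :: "nat \<Rightarrow> real"
  assumes A: "\<And>i j. 0 \<le> A $ i $ j"
    and step: "\<And>\<tau> i. \<tau> < T \<Longrightarrow> v (Suc \<tau>) $ i \<le> (A *v v \<tau> + w (Suc \<tau>) *\<^sub>R a) $ i"
  shows "v T $ i \<le> (Apow A T (v 0) + (\<Sum>\<sigma>\<in>{1..T}. w \<sigma> *\<^sub>R Apow A (T - \<sigma>) a)) $ i"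
  using step
proof (induction T arbitrary: i)
  case 0 thus ?case by simp
next
  case (Suc T)
  have IH: "v T $ j \<le> (Apow A T (v 0) + (\<Sum>\<sigma>\<in>{1..T}. w \<sigma> *\<^sub>R Apow A (T - \<sigma>) a)) $ j" for j
    using Suc by simp
  have "v (Suc T) $ i \<le> (A *v v T + w (Suc T) *\<^sub>R a) $ i" using Suc.prems by simp
  also have "\<dots> \<le> (A *v (Apow A T (v 0) + (\<Sum>\<sigma>\<in>{1..T}. w \<sigma> *\<^sub>R Apow A (T - \<sigma>) a)) + w (Suc T) *\<^sub>R a) $ i"
    using mv_mono[OF A IH, of i] by simp
  also have "A *v (Apow A T (v 0) + (\<Sum>\<sigma>\<in>{1..T}. w \<sigma> *\<^sub>R Apow A (T - \<sigma>) a)) + w (Suc T) *\<^sub>R a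
      = Apow A (Suc T) (v 0) + (\<Sum>\<sigma>\<in>{1..Suc T}. w \<sigma> *\<^sub>R Apow A (Suc T - \<sigma>) a)"
  proof -
    have "(\<Sum>\<sigma>\<in>{1..T}. A *v (w \<sigma> *\<^sub>R Apow A (T - \<sigma>) a)) = (\<Sum>\<sigma>\<in>{1..T}. w \<sigma> *\<^sub>R Apow A (Suc T - \<sigma>) a)"
      by (rule sum.cong) (auto simp: matrix_vector_mult_scaleR Suc_diff_le)
    thus ?thesis by (simp add: matrix_vector_right_distrib mv_sum sum.cl_ivl_Suc)
  qed
  finally show ?case .
qed

lemma vec2_norm_le:
  assumes "\<And>i. 0 \<le> (x::real^2) $ i" "\<And>i. x $ i \<le> y $ i"
  shows "norm x \<le> norm y"
  by (rule norm_le_componentwise_cart) (metis assms abs_of_nonneg order_trans real_norm_def)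

(* ---- part P6c ---- *)
lemma trace_conj:
  fixes U T :: "complex^'n::finite^'n"
  assumes u: "cadj U ** U = mat 1"
  shows "(\<Sum>i\<in>UNIV. (U ** T ** cadj U) $ i $ i) = (\<Sum>i\<in>UNIV. T $ i $ i)"
proof -
  have uu: "(\<Sum>i\<in>UNIV. cnj (U$i$k) * U$i$j) = (if k = j then 1 else 0)" for j k
    using arg_cong[OF u, of "\<lambda>M. M $ k $ j"] by (simp add: matrix_matrix_mult_def cadj_def mat_def)
  have "(\<Sum>i\<in>UNIV. (U ** T ** cadj U) $ i $ i)
      = (\<Sum>i\<in>UNIV. \<Sum>k\<in>UNIV. \<Sum>j\<in>UNIV. T$j$k * (U$i$j * cnj (U$i$k)))"
    by (simp add: matrix_matrix_mult_def cadj_def sum_distrib_left sum_distrib_right algebra_simps)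
  also have "\<dots> = (\<Sum>k\<in>UNIV. \<Sum>i\<in>UNIV. \<Sum>j\<in>UNIV. T$j$k * (U$i$j * cnj (U$i$k)))"
    by (rule sum.swap)
  also have "\<dots> = (\<Sum>k\<in>UNIV. \<Sum>j\<in>UNIV. \<Sum>i\<in>UNIV. T$j$k * (U$i$j * cnj (U$i$k)))"
    by (rule sum.cong[OF refl], rule sum.swap)
  also have "\<dots> = (\<Sum>k\<in>UNIV. \<Sum>j\<in>UNIV. T$j$k * (\<Sum>i\<in>UNIV. cnj (U$i$k) * U$i$j))"
    by (simp add: sum_distrib_left algebra_simps)
  also have "\<dots> = (\<Sum>i\<in>UNIV. T $ i $ i)"
    by (simp add: uu if_distrib sum.delta cong: if_cong)
  finally show ?thesis .
qed

lemma schur_facts: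
  fixes A :: "real^2^2" and U :: "complex^2^2"
  assumes U: "unitary U" and l12: "l2 \<le> l1"
    and dec: "cmat A = U ** mat2 (complex_of_real l1) nu 0 (complex_of_real l2) ** cadj U"
    and tr: "A$1$1 + A$2$2 > 0"
  shows "l1 > 0" "\<bar>l2\<bar> \<le> l1" "spec_rad A = l1"
    "\<And>s y. s \<le> t \<Longrightarrow> norm (Apow A s y) \<le> mu l1 l2 nu t * l1^s * norm y"
proof -
  define T where "T = mat2 (complex_of_real l1) nu 0 (complex_of_real l2)"
  have u1: "cadj U ** U = mat 1" and u2: "U ** cadj U = mat 1" using U unfolding unitary_def by auto
  have "(\<Sum>i\<in>UNIV. cmat A $ i $ i) = (\<Sum>i\<in>UNIV. T $ i $ i)"
    unfolding dec T_def by (rule trace_conj[OF u1])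
  hence "complex_of_real (A$1$1 + A$2$2) = complex_of_real (l1 + l2)"
    by (simp add: sum_2 cmat_def T_def mat2_def)
  hence tl: "l1 + l2 > 0" using tr of_real_eq_iff by metis
  show l1: "l1 > 0" using tl l12 by linarith
  show l2: "\<bar>l2\<bar> \<le> l1" using tl l12 by linarith
  have inv: "cadj U *v (U *v q) = q" for q using u1 by (simp add: matrix_vector_mul_assoc)
  have inv2: "U *v (cadj U *v q) = q" for q using u2 by (simp add: matrix_vector_mul_assoc)
  have Av: "cmat A *v v = U *v (T *v (cadj U *v v))" for v
    unfolding dec T_def by (simp add: matrix_vector_mul_assoc matrix_mul_assoc)
  have sub: "eigenvalues (cmat A) \<subseteq> {complex_of_real l1, complex_of_real l2}"
  proof
    fix z assume "z \<in> eigenvalues (cmat A)"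
    then obtain v where v: "v \<noteq> 0" "cmat A *v v = z *s v" unfolding eigenvalues_def by blast
    define w where "w = cadj U *v v"
    have Tw: "T *v w = z *s w"
    proof -
      have "T *v w = cadj U *v (cmat A *v v)" unfolding Av w_def inv ..
      also have "\<dots> = z *s w" unfolding v(2) w_def by (simp add: vector_scalar_commute)
      finally show ?thesis .
    qed
    have w0: "w \<noteq> 0" using v(1) inv2[of v] unfolding w_def by auto
    have e1: "complex_of_real l1 * w$1 + nu * w$2 = z * w$1"
      using arg_cong[OF Tw, of "\<lambda>x. x $ 1"] unfolding T_def by (simp add: mat2_mv1)
    have e2: "complex_of_real l2 * w$2 = z * w$2"
      using arg_cong[OF Tw, of "\<lambda>x. x $ 2"] unfolding T_def by (simp add: mat2_mv2)
    show "z \<in> {complex_of_real l1, complex_of_real l2}"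
    proof (cases "w$2 = 0")
      case True
      hence "w$1 \<noteq> 0" using w0 by (auto simp: vec_eq_iff forall_2)
      thus ?thesis using e1 True by auto
    next
      case False thus ?thesis using e2 by auto
    qed
  qed
  have mem: "complex_of_real l1 \<in> eigenvalues (cmat A)"
  proof -
    define e :: "complex^2" where "e = (\<chi> i. if i = 1 then 1 else 0)"
    have Te: "T *v e = complex_of_real l1 *s e"
      unfolding T_def e_def by (simp add: vec_eq_iff forall_2 mat2_mv1 mat2_mv2)
    have "cmat A *v (U *v e) = complex_of_real l1 *s (U *v e)"
      unfolding Av inv Te by (simp add: vector_scalar_commute)
    moreover have "U *v e \<noteq> 0"
    proof
      assume "U *v e = 0"
      hence "e = 0" using inv[of e] by simp
      thus False unfolding e_def by (auto simp: vec_eq_iff dest: spec[of _ 1])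
    qed
    ultimately show ?thesis unfolding eigenvalues_def by blast
  qed
  have fin: "finite (eigenvalues (cmat A))" using sub finite_subset by blast
  show "spec_rad A = l1" unfolding spec_rad_def
  proof (rule Max_eqI)
    show "finite (cmod ` eigenvalues (cmat A))" using fin by simp
    show "l1 \<in> cmod ` eigenvalues (cmat A)" using mem l1 by (metis image_eqI norm_of_real abs_of_pos)
    fix y assume "y \<in> cmod ` eigenvalues (cmat A)"
    thus "y \<le> l1" using sub l1 l2 by auto
  qed
  fix s y assume st: "s \<le> t"
  have "norm (Apow A s y) = norm (cv (Apow A s y))" by (simp add: norm_cv)
  also have "\<dots> = norm (U *v Cpow T s (cadj U *v cv y))"
    unfolding cv_Apow by (simp only: Cpow_conj[OF u1 u2 dec[folded T_def]])
  also have "\<dots> = norm (Cpow T s (cadj U *v cv y))" by (rule unitary_norm[OF u1])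
  also have "\<dots> \<le> mu l1 l2 nu t * l1^s * norm (cadj U *v cv y)"
    unfolding T_def by (rule Tpow_bound[OF l1 l2 st])
  also have "norm (cadj U *v cv y) = norm y"
  proof -
    have "cadj (cadj U) ** cadj U = mat 1" using u2 by (simp add: cadj_cadj)
    thus ?thesis by (simp add: unitary_norm norm_cv)
  qed
  finally show "norm (Apow A s y) \<le> mu l1 l2 nu t * l1^s * norm y" .
qed

(* ---- part P8 ---- *)
lemma hockey: "(\<Sum>\<sigma>\<in>{1..\<tau>}. (\<sigma> - 1 + k) choose k) = (\<tau> + k) choose (Suc k)"
proof (induction \<tau>)
  case 0 thus ?case by simp
next
  case (Suc \<tau>)
  have "(\<Sum>\<sigma>\<in>{1..Suc \<tau>}. (\<sigma> - 1 + k) choose k) = (\<Sum>\<sigma>\<in>{1..\<tau>}. (\<sigma> - 1 + k) choose k) + ((\<tau> + k) choose k)"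
    by (simp add: sum.cl_ivl_Suc)
  also have "\<dots> = (Suc \<tau> + k) choose (Suc k)" using Suc by simp
  finally show ?case .
qed

definition Kc :: "(nat \<Rightarrow> real) \<Rightarrow> (nat \<Rightarrow> real) \<Rightarrow> (nat \<Rightarrow> real) \<Rightarrow> nat \<Rightarrow> nat \<Rightarrow> nat \<Rightarrow> real" where
  "Kc M R \<alpha> l m \<tau> = (\<Prod>i=m..l. M i) * real ((\<tau> + l - m - 1) choose (l - m)) * (Max (R ` {m..l}))^\<tau>
      * (\<Prod>i=Suc m..l. \<alpha> i)"

lemma Max_R_nonneg:
  assumes "\<And>i. 0 \<le> (R::nat \<Rightarrow> real) i" "m \<le> l" shows "0 \<le> Max (R ` {m..l})"
proof -
  have "R m \<le> Max (R ` {m..l})" by (rule Max_ge) (use assms in auto)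
  thus ?thesis using assms(1)[of m] by linarith
qed

lemma Kc_step:
  fixes M R \<alpha> :: "nat \<Rightarrow> real"
  assumes nn: "\<And>i. 0 \<le> M i" "\<And>i. 0 \<le> R i" "\<And>i. 0 \<le> \<alpha> i" and ml: "m \<le> l" and m1: "1 \<le> m"
  shows "(\<Sum>\<sigma>\<in>{1..\<tau>}. M (Suc l) * R (Suc l)^(\<tau>-\<sigma>) * \<alpha> (Suc l) * Kc M R \<alpha> l m \<sigma>) \<le> Kc M R \<alpha> (Suc l) m \<tau>"
proof -
  define Rm where "Rm = Max (R ` {m..l})"
  define Rm' where "Rm' = Max (R ` {m..Suc l})"
  define PM where "PM = (\<Prod>i=m..l. M i)"
  define PA where "PA = (\<Prod>i=Suc m..l. \<alpha> i)"
  define k where "k = l - m"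
  have Rm0: "0 \<le> Rm" unfolding Rm_def using Max_R_nonneg[OF nn(2) ml] .
  have RmRm': "Rm \<le> Rm'" unfolding Rm_def Rm'_def by (rule Max_mono) (use ml in auto)
  have RlRm': "R (Suc l) \<le> Rm'" unfolding Rm'_def by (rule Max_ge) (use ml in auto)
  have PM0: "0 \<le> PM" unfolding PM_def using nn by (simp add: prod_nonneg)
  have PA0: "0 \<le> PA" unfolding PA_def using nn by (simp add: prod_nonneg)
  have PM': "(\<Prod>i=m..Suc l. M i) = M (Suc l) * PM" unfolding PM_def using ml by (simp add: prod.nat_ivl_Suc')
  have PA': "(\<Prod>i=Suc m..Suc l. \<alpha> i) = \<alpha> (Suc l) * PA" unfolding PA_def using ml by (simp add: prod.nat_ivl_Suc')
  have trm: "M (Suc l) * R (Suc l)^(\<tau>-\<sigma>) * \<alpha> (Suc l) * Kc M R \<alpha> l m \<sigma>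
      \<le> (M (Suc l) * PM) * (\<alpha> (Suc l) * PA) * Rm'^\<tau> * real ((\<sigma> - 1 + k) choose k)"
    if s: "\<sigma> \<in> {1..\<tau>}" for \<sigma>
  proof -
    have eqc: "\<sigma> + l - m - 1 = \<sigma> - 1 + k" unfolding k_def using s ml by auto
    have "R (Suc l)^(\<tau>-\<sigma>) * Rm^\<sigma> \<le> Rm'^(\<tau>-\<sigma>) * Rm'^\<sigma>"
      using RlRm' RmRm' Rm0 nn(2) by (intro mult_mono power_mono) auto
    also have "\<dots> = Rm'^\<tau>" using s by (simp add: power_add[symmetric])
    finally have rr: "R (Suc l)^(\<tau>-\<sigma>) * Rm^\<sigma> \<le> Rm'^\<tau>" .
    have c0: "0 \<le> M (Suc l) * PM * \<alpha> (Suc l) * PA * real ((\<sigma> - 1 + k) choose k)"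
      using nn PM0 PA0 by simp
    have "M (Suc l) * R (Suc l)^(\<tau>-\<sigma>) * \<alpha> (Suc l) * Kc M R \<alpha> l m \<sigma>
       = (M (Suc l) * PM * \<alpha> (Suc l) * PA * real ((\<sigma> - 1 + k) choose k)) * (R (Suc l)^(\<tau>-\<sigma>) * Rm^\<sigma>)"
      unfolding Kc_def eqc PM_def PA_def Rm_def k_def[symmetric] by (simp add: algebra_simps)
    also have "\<dots> \<le> (M (Suc l) * PM * \<alpha> (Suc l) * PA * real ((\<sigma> - 1 + k) choose k)) * Rm'^\<tau>"
      using rr c0 by (rule mult_left_mono)
    finally show ?thesis by (simp add: algebra_simps)
  qed
  have "(\<Sum>\<sigma>\<in>{1..\<tau>}. M (Suc l) * R (Suc l)^(\<tau>-\<sigma>) * \<alpha> (Suc l) * Kc M R \<alpha> l m \<sigma>)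
      \<le> (\<Sum>\<sigma>\<in>{1..\<tau>}. (M (Suc l) * PM) * (\<alpha> (Suc l) * PA) * Rm'^\<tau> * real ((\<sigma> - 1 + k) choose k))"
    by (rule sum_mono) (rule trm)
  also have "\<dots> = (M (Suc l) * PM) * (\<alpha> (Suc l) * PA) * Rm'^\<tau> * real (\<Sum>\<sigma>\<in>{1..\<tau>}. (\<sigma> - 1 + k) choose k)"
    by (simp add: sum_distrib_left)
  also have "\<dots> = Kc M R \<alpha> (Suc l) m \<tau>"
  proof -
    have "\<tau> + Suc l - m - 1 = \<tau> + k" "Suc l - m = Suc k" unfolding k_def using ml by auto
    thus ?thesis unfolding Kc_def hockey PM' PA' Rm'_def by (simp add: algebra_simps)
  qed
  finally show ?thesis .
qed

lemma multilayer:
  fixes n :: "nat \<Rightarrow> nat \<Rightarrow> real" and M R \<alpha> :: "nat \<Rightarrow> real"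
  assumes nn: "\<And>i. 0 \<le> M i" "\<And>i. 0 \<le> R i" "\<And>i. 0 \<le> \<alpha> i" and n0: "\<And>l \<tau>. 0 \<le> n l \<tau>"
    and rec1: "\<And>\<tau>. \<tau> \<le> t \<Longrightarrow> n 1 \<tau> \<le> M 1 * R 1 ^ \<tau> * n 1 0"
    and recl: "\<And>l \<tau>. 2 \<le> l \<Longrightarrow> l \<le> L \<Longrightarrow> \<tau> \<le> t \<Longrightarrow>
        n l \<tau> \<le> M l * R l ^ \<tau> * n l 0 + (\<Sum>\<sigma>\<in>{1..\<tau>}. M l * R l ^ (\<tau> - \<sigma>) * \<alpha> l * n (l - 1) \<sigma>)"
  shows "1 \<le> l \<Longrightarrow> l \<le> L \<Longrightarrow> \<tau> \<le> t \<Longrightarrow> n l \<tau> \<le> (\<Sum>m\<in>{1..l}. Kc M R \<alpha> l m \<tau> * n m 0)"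
proof (induction l arbitrary: \<tau> rule: nat_induct_at_least)
  case base
  thus ?case using rec1[of \<tau>] by (simp add: Kc_def)
next
  case (Suc l)
  have IH: "\<And>\<sigma>. \<sigma> \<le> t \<Longrightarrow> n l \<sigma> \<le> (\<Sum>m\<in>{1..l}. Kc M R \<alpha> l m \<sigma> * n m 0)" using Suc by simp
  have "n (Suc l) \<tau> \<le> M (Suc l) * R (Suc l) ^ \<tau> * n (Suc l) 0
       + (\<Sum>\<sigma>\<in>{1..\<tau>}. M (Suc l) * R (Suc l) ^ (\<tau> - \<sigma>) * \<alpha> (Suc l) * n l \<sigma>)"
    using recl[of "Suc l" \<tau>] Suc by simp
  also have "\<dots> \<le> M (Suc l) * R (Suc l) ^ \<tau> * n (Suc l) 0
       + (\<Sum>\<sigma>\<in>{1..\<tau>}. M (Suc l) * R (Suc l) ^ (\<tau> - \<sigma>) * \<alpha> (Suc l) * (\<Sum>m\<in>{1..l}. Kc M R \<alpha> l m \<sigma> * n m 0))"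
    using Suc.prems nn IH by (intro add_mono order_refl sum_mono mult_left_mono) auto
  also have "(\<Sum>\<sigma>\<in>{1..\<tau>}. M (Suc l) * R (Suc l) ^ (\<tau> - \<sigma>) * \<alpha> (Suc l) * (\<Sum>m\<in>{1..l}. Kc M R \<alpha> l m \<sigma> * n m 0))
      = (\<Sum>m\<in>{1..l}. (\<Sum>\<sigma>\<in>{1..\<tau>}. M (Suc l) * R (Suc l) ^ (\<tau> - \<sigma>) * \<alpha> (Suc l) * Kc M R \<alpha> l m \<sigma>) * n m 0)"
  proof -
    have "(\<Sum>\<sigma>\<in>{1..\<tau>}. M (Suc l) * R (Suc l) ^ (\<tau> - \<sigma>) * \<alpha> (Suc l) * (\<Sum>m\<in>{1..l}. Kc M R \<alpha> l m \<sigma> * n m 0))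
      = (\<Sum>\<sigma>\<in>{1..\<tau>}. \<Sum>m\<in>{1..l}. M (Suc l) * R (Suc l) ^ (\<tau> - \<sigma>) * \<alpha> (Suc l) * Kc M R \<alpha> l m \<sigma> * n m 0)"
      by (simp only: sum_distrib_left mult.assoc)
    also have "\<dots> = (\<Sum>m\<in>{1..l}. \<Sum>\<sigma>\<in>{1..\<tau>}. M (Suc l) * R (Suc l) ^ (\<tau> - \<sigma>) * \<alpha> (Suc l) * Kc M R \<alpha> l m \<sigma> * n m 0)"
      by (rule sum.swap)
    also have "\<dots> = (\<Sum>m\<in>{1..l}. (\<Sum>\<sigma>\<in>{1..\<tau>}. M (Suc l) * R (Suc l) ^ (\<tau> - \<sigma>) * \<alpha> (Suc l) * Kc M R \<alpha> l m \<sigma>) * n m 0)"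
      by (simp only: sum_distrib_right)
    finally show ?thesis .
  qed
  also have "\<dots> \<le> (\<Sum>m\<in>{1..l}. Kc M R \<alpha> (Suc l) m \<tau> * n m 0)"
    using Suc.hyps nn n0 by (intro sum_mono mult_right_mono Kc_step) auto
  also have "M (Suc l) * R (Suc l) ^ \<tau> * n (Suc l) 0 = Kc M R \<alpha> (Suc l) (Suc l) \<tau> * n (Suc l) 0"
    by (simp add: Kc_def)
  finally show ?case using Suc.hyps by (simp add: sum.cl_ivl_Suc algebra_simps)
qed

(* ---- part P9 ---- *)
lemma norm_snd_diff: "norm (snd a - snd b) \<le> norm (a - (b::'a::real_normed_vector \<times> 'b::real_normed_vector))"
proof -
  have "a - b = (fst a - fst b, snd a - snd b)" by (metis fst_diff snd_diff prod.collapse)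
  thus ?thesis using norm_snd_le[of "snd a - snd b" "fst a - fst b"] by simp
qed

lemma traj_S:
  fixes P :: "('x::finite, 'c::finite) lstm"
  assumes x0: "xmax \<ge> 0" and S: "\<forall>l\<in>{1..L}. s l \<in> Sset P xmax l k"
    and inp: "\<forall>\<tau>\<le>t. \<forall>j. \<bar>x \<tau> $ j\<bar> \<le> xmax"
  shows "\<tau> \<le> t \<Longrightarrow> l \<in> {1..L} \<Longrightarrow> traj P s x \<tau> l \<in> Sset P xmax l k"
proof (induction \<tau> arbitrary: l)
  case 0 thus ?case using S by simp
next
  case (Suc \<tau>)
  have "newst P (x \<tau>) (traj P s x \<tau>) l \<in> Sset P xmax l k"
    using Suc inp by (intro newst_S[OF x0]) auto
  thus ?case by simp
qed

lemma layer_bound: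
  fixes P :: "('x::finite, 'c::finite) lstm" and x :: "nat \<Rightarrow> real^'x"
  assumes x0: "xmax \<ge> 0" and S1: "\<forall>l\<in>{1..L}. s1 l \<in> Sset P xmax l k" and S2: "\<forall>l\<in>{1..L}. s2 l \<in> Sset P xmax l k"
    and inp: "\<forall>\<tau>\<le>t. \<forall>j. \<bar>x \<tau> $ j\<bar> \<le> xmax"
    and l: "l \<in> {1..L}" and T: "T \<le> t"
    and mat: "\<And>s y. s \<le> t \<Longrightarrow> norm (Apow (A_s P xmax l k) s y) \<le> Mc * Rc^s * norm y"
    and Mc: "0 \<le> Mc" and Rc: "0 \<le> Rc"
  shows "norm (traj P s1 x T l - traj P s2 x T l) \<le> Mc * Rc^T * norm (s1 l - s2 l)
     + (\<Sum>\<sigma>\<in>{1..T}. Mc * Rc^(T-\<sigma>) * norm (a_x P xmax l k) *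
          (if l = 1 then 0 else norm (traj P s1 x \<sigma> (l-1) - traj P s2 x \<sigma> (l-1))))"
proof -
  define A where "A = A_s P xmax l k"
  define a where "a = a_x P xmax l k"
  define v where "v \<tau> = Vd (traj P s1 x \<tau> l) (traj P s2 x \<tau> l)" for \<tau>
  define w where "w \<sigma> = dlay P (x (\<sigma> - 1)) (traj P s1 x (\<sigma> - 1)) (traj P s2 x (\<sigma> - 1)) l" for \<sigma>
  have w0: "0 \<le> w \<sigma>" for \<sigma> unfolding w_def dlay_def by simp
  have step: "v (Suc \<tau>) $ i \<le> (A *v v \<tau> + w (Suc \<tau>) *\<^sub>R a) $ i" if "\<tau> < T" for \<tau> i
  proof -
    have tt: "\<tau> \<le> t" using that T by simp
    show ?thesis unfolding v_def w_def A_def a_def traj.simps diff_Suc_1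
      by (rule newst_Vd[OF x0]) (use l tt inp traj_S[OF x0 S1 inp] traj_S[OF x0 S2 inp] in auto)
  qed
  have ur: "v T $ i \<le> (Apow A T (v 0) + (\<Sum>\<sigma>\<in>{1..T}. w \<sigma> *\<^sub>R Apow A (T - \<sigma>) a)) $ i" for i
    by (rule unroll[where v=v and w=w and a=a and A=A and T=T, OF _ step]) (auto simp: A_def A_s_nonneg)
  have "norm (v T) \<le> norm (Apow A T (v 0) + (\<Sum>\<sigma>\<in>{1..T}. w \<sigma> *\<^sub>R Apow A (T - \<sigma>) a))"
    by (rule vec2_norm_le[OF _ ur]) (simp add: v_def Vd_nonneg)
  also have "\<dots> \<le> norm (Apow A T (v 0)) + (\<Sum>\<sigma>\<in>{1..T}. w \<sigma> * norm (Apow A (T - \<sigma>) a))"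
    by (rule order_trans[OF norm_triangle_ineq add_mono[OF order_refl order_trans[OF norm_sum]]])
       (simp add: w0)
  also have "\<dots> \<le> Mc * Rc^T * norm (v 0) + (\<Sum>\<sigma>\<in>{1..T}. w \<sigma> * (Mc * Rc^(T-\<sigma>) * norm a))"
    using T w0 by (intro add_mono sum_mono mult_left_mono) (auto simp: A_def mat)
  also have "\<dots> \<le> Mc * Rc^T * norm (s1 l - s2 l)
     + (\<Sum>\<sigma>\<in>{1..T}. Mc * Rc^(T-\<sigma>) * norm a *
          (if l = 1 then 0 else norm (traj P s1 x \<sigma> (l-1) - traj P s2 x \<sigma> (l-1))))"
  proof -
    have "w \<sigma> \<le> (if l = 1 then 0 else norm (traj P s1 x \<sigma> (l-1) - traj P s2 x \<sigma> (l-1)))" if sT: "\<sigma> \<in> {1..T}" for \<sigma>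
    proof (cases "l = 1")
      case True thus ?thesis by (simp add: w_def dlay_def)
    next
      case False
      obtain \<rho> where r: "\<sigma> = Suc \<rho>" using sT by (cases \<sigma>) auto
      have "w \<sigma> = norm (snd (traj P s1 x \<sigma> (l-1)) - snd (traj P s2 x \<sigma> (l-1)))"
        unfolding w_def dlay_def r using False by simp
      also have "\<dots> \<le> norm (traj P s1 x \<sigma> (l-1) - traj P s2 x \<sigma> (l-1))"
        by (rule norm_snd_diff)
      finally show ?thesis using False by simp
    qed
    note wle = this
    have "(\<Sum>\<sigma>\<in>{1..T}. w \<sigma> * (Mc * Rc^(T-\<sigma>) * norm a)) \<le> (\<Sum>\<sigma>\<in>{1..T}. Mc * Rc^(T-\<sigma>) * norm a *
          (if l = 1 then 0 else norm (traj P s1 x \<sigma> (l-1) - traj P s2 x \<sigma> (l-1))))"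
    proof (rule sum_mono)
      fix \<sigma> assume "\<sigma> \<in> {1..T}"
      hence "w \<sigma> * (Mc * Rc^(T-\<sigma>) * norm a) \<le> (if l = 1 then 0 else norm (traj P s1 x \<sigma> (l-1) - traj P s2 x \<sigma> (l-1))) * (Mc * Rc^(T-\<sigma>) * norm a)"
        using wle Mc Rc by (intro mult_right_mono) auto
      thus "w \<sigma> * (Mc * Rc^(T-\<sigma>) * norm a) \<le> Mc * Rc^(T-\<sigma>) * norm a *
          (if l = 1 then 0 else norm (traj P s1 x \<sigma> (l-1) - traj P s2 x \<sigma> (l-1)))" by (simp only: mult.commute)
    qed
    moreover have "norm (v 0) = norm (s1 l - s2 l)" by (simp add: v_def norm_Vd)
    ultimately show ?thesis by simp
  qed
  finally show ?thesis by (simp add: v_def norm_Vd a_def)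
qed

(* ---- part P10 ---- *)
theorem proposition5p2:
  fixes P :: "('x::finite, 'c::finite) lstm"
    and L k t :: nat and xmax :: real
    and s1 s2 :: "nat \<Rightarrow> 'c lstate"
    and x :: "nat \<Rightarrow> real^'x"
    and Ud :: "nat \<Rightarrow> complex^2^2" and lam1 lam2 :: "nat \<Rightarrow> real" and nu :: "nat \<Rightarrow> complex"
  assumes "L \<ge> 1" and "xmax > 0"
    and schur: "\<forall>l\<in>{1..L}. unitary (Ud l) \<and> lam1 l \<ge> lam2 l \<and>
          cmat (A_s P xmax l k) = Ud l ** mat2 (complex_of_real (lam1 l)) (nu l) 0 (complex_of_real (lam2 l)) ** cadj (Ud l)"
    and S1: "\<forall>l\<in>{1..L}. s1 l \<in> Sset P xmax l k"
    and S2: "\<forall>l\<in>{1..L}. s2 l \<in> Sset P xmax l k"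
    and inp: "\<forall>\<tau>\<le>t. \<forall>j. \<bar>x \<tau> $ j\<bar> \<le> xmax"
    and "t > 0"
  shows "norm (traj P s1 x t L - traj P s2 x t L)
    \<le> mu (lam1 L) (lam2 L) (nu L) t * spec_rad (A_s P xmax L k) ^ t * norm (s1 L - s2 L)
      + (\<Sum>l = 1..<L.
           (\<Prod>i = l..L. mu (lam1 i) (lam2 i) (nu i) t)
           * (fact (t + L - l) / (fact t * fact (L - l)))
           * Max ((\<lambda>i. spec_rad (A_s P xmax i k) ^ t) ` {l..L})
           * (\<Prod>i = Suc l..L. norm (a_x P xmax i k))
           * norm (s1 l - s2 l))"
proof -
  have x0: "xmax \<ge> 0" using assms(2) by simp
  define M where "M i = mu (lam1 i) (lam2 i) (nu i) t" for i
  define R where "R i = max 0 (spec_rad (A_s P xmax i k))" for i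
  define \<alpha> where "\<alpha> i = norm (a_x P xmax i k)" for i
  define n where "n l \<tau> = norm (traj P s1 x \<tau> l - traj P s2 x \<tau> l)" for l \<tau>
  have M0: "0 \<le> M i" for i unfolding M_def mu_def Let_def by simp
  have R0: "0 \<le> R i" for i unfolding R_def by simp
  have a0: "0 \<le> \<alpha> i" for i unfolding \<alpha>_def by simp
  have n0: "0 \<le> n l \<tau>" for l \<tau> unfolding n_def by simp
  have sf: "lam1 l > 0" "\<bar>lam2 l\<bar> \<le> lam1 l" "spec_rad (A_s P xmax l k) = lam1 l"
    "\<And>s y. s \<le> t \<Longrightarrow> norm (Apow (A_s P xmax l k) s y) \<le> mu (lam1 l) (lam2 l) (nu l) t * lam1 l^s * norm y"
    if l: "l \<in> {1..L}" for l
  proof -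
    have sc: "unitary (Ud l)" "lam2 l \<le> lam1 l"
      "cmat (A_s P xmax l k) = Ud l ** mat2 (complex_of_real (lam1 l)) (nu l) 0 (complex_of_real (lam2 l)) ** cadj (Ud l)"
      using schur l by auto
    note f = schur_facts[OF sc A_s_trace]
    show "lam1 l > 0" "\<bar>lam2 l\<bar> \<le> lam1 l" "spec_rad (A_s P xmax l k) = lam1 l" using f(1-3) .
    show "\<And>s y. s \<le> t \<Longrightarrow> norm (Apow (A_s P xmax l k) s y) \<le> mu (lam1 l) (lam2 l) (nu l) t * lam1 l^s * norm y"
      by (rule f(4))
  qed
  have Rl: "R l = spec_rad (A_s P xmax l k)" if "l \<in> {1..L}" for l
    using sf[OF that] unfolding R_def by simp
  have lb: "n l T \<le> M l * R l ^ T * n l 0 + (\<Sum>\<sigma>\<in>{1..T}. M l * R l ^ (T - \<sigma>) * \<alpha> l *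
      (if l = 1 then 0 else n (l - 1) \<sigma>))" if l: "l \<in> {1..L}" and T: "T \<le> t" for l T
  proof -
    have "norm (traj P s1 x T l - traj P s2 x T l) \<le> M l * R l ^ T * norm (s1 l - s2 l)
     + (\<Sum>\<sigma>\<in>{1..T}. M l * R l^(T-\<sigma>) * norm (a_x P xmax l k) *
          (if l = 1 then 0 else norm (traj P s1 x \<sigma> (l-1) - traj P s2 x \<sigma> (l-1))))"
      by (rule layer_bound[OF x0 S1 S2 inp l T _ M0 R0]) (use sf[OF l] Rl[OF l] in \<open>simp add: M_def\<close>)
    thus ?thesis unfolding n_def \<alpha>_def by simp
  qed
  have main: "n L t \<le> (\<Sum>m\<in>{1..L}. Kc M R \<alpha> L m t * n m 0)"
  proof (rule multilayer[OF M0 R0 a0 n0])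
    show "n 1 \<tau> \<le> M 1 * R 1 ^ \<tau> * n 1 0" if "\<tau> \<le> t" for \<tau>
      using lb[of 1 \<tau>] that assms(1) by simp
    show "n l \<tau> \<le> M l * R l ^ \<tau> * n l 0 + (\<Sum>\<sigma>\<in>{1..\<tau>}. M l * R l ^ (\<tau> - \<sigma>) * \<alpha> l * n (l - 1) \<sigma>)"
      if "2 \<le> l" "l \<le> L" "\<tau> \<le> t" for l \<tau>
      using lb[of l \<tau>] that by simp
  qed (use assms(1) in auto)
  have split: "{1..L} = insert L {1..<L}" using assms(1) by auto
  have KL: "Kc M R \<alpha> L L t = M L * R L ^ t" by (simp add: Kc_def)
  have Km: "Kc M R \<alpha> L m t * n m 0 \<le> (\<Prod>i = m..L. mu (lam1 i) (lam2 i) (nu i) t)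
           * (fact (t + L - m) / (fact t * fact (L - m)))
           * Max ((\<lambda>i. spec_rad (A_s P xmax i k) ^ t) ` {m..L})
           * (\<Prod>i = Suc m..L. norm (a_x P xmax i k))
           * norm (s1 m - s2 m)" if m: "m \<in> {1..<L}" for m
  proof -
    have c: "real ((t + L - m - 1) choose (L - m)) \<le> fact (t + L - m) / (fact t * fact (L - m))"
    proof -
      have "(t + L - m - 1) choose (L - m) \<le> (t + L - m) choose (L - m)" by (rule binomial_right_mono) simp
      moreover have "real ((t + L - m) choose (L - m)) = fact (t + L - m) / (fact (L - m) * fact (t + L - m - (L - m)))"
        by (rule binomial_fact) simp
      moreover have "t + L - m - (L - m) = t" using m by simp
      ultimately show ?thesis by (simp add: mult.commute)
    qed
    have mx: "(Max (R ` {m..L}))^t \<le> Max ((\<lambda>i. spec_rad (A_s P xmax i k) ^ t) ` {m..L})"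
    proof -
      have "Max (R ` {m..L}) \<in> R ` {m..L}" by (rule Max_in) (use m in auto)
      then obtain j where j: "j \<in> {m..L}" "Max (R ` {m..L}) = R j" by auto
      have "R j = spec_rad (A_s P xmax j k)" using j m by (intro Rl) auto
      moreover have "spec_rad (A_s P xmax j k) ^ t \<le> Max ((\<lambda>i. spec_rad (A_s P xmax i k) ^ t) ` {m..L})"
        by (rule Max_ge) (use j in auto)
      ultimately show ?thesis using j by simp
    qed
    have PM0: "0 \<le> (\<Prod>i = m..L. M i)" using M0 by (simp add: prod_nonneg)
    have PA0: "0 \<le> (\<Prod>i = Suc m..L. \<alpha> i)" using a0 by (simp add: prod_nonneg)
    have Mx0: "0 \<le> Max (R ` {m..L})" using Max_R_nonneg[OF R0] m by auto
    have "Kc M R \<alpha> L m t * n m 0 = (\<Prod>i = m..L. M i) * real ((t + L - m - 1) choose (L - m))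
        * (Max (R ` {m..L}))^t * (\<Prod>i = Suc m..L. \<alpha> i) * n m 0" by (simp add: Kc_def)
    also have "\<dots> \<le> (\<Prod>i = m..L. M i) * (fact (t + L - m) / (fact t * fact (L - m)))
        * Max ((\<lambda>i. spec_rad (A_s P xmax i k) ^ t) ` {m..L}) * (\<Prod>i = Suc m..L. \<alpha> i) * n m 0"
      using c mx PM0 PA0 Mx0 n0[of m 0]
      by (intro mult_right_mono mult_mono) (auto intro: order_trans[OF zero_le_power[OF Mx0] mx])
    finally show ?thesis by (simp add: M_def \<alpha>_def n_def)
  qed
  have "norm (traj P s1 x t L - traj P s2 x t L) = n L t" by (simp add: n_def)
  also have "\<dots> \<le> Kc M R \<alpha> L L t * n L 0 + (\<Sum>m\<in>{1..<L}. Kc M R \<alpha> L m t * n m 0)"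
    using main unfolding split by simp
  also have "\<dots> \<le> mu (lam1 L) (lam2 L) (nu L) t * spec_rad (A_s P xmax L k) ^ t * norm (s1 L - s2 L)
      + (\<Sum>l = 1..<L.
           (\<Prod>i = l..L. mu (lam1 i) (lam2 i) (nu i) t)
           * (fact (t + L - l) / (fact t * fact (L - l)))
           * Max ((\<lambda>i. spec_rad (A_s P xmax i k) ^ t) ` {l..L})
           * (\<Prod>i = Suc l..L. norm (a_x P xmax i k))
           * norm (s1 l - s2 l))"
    using Km Rl[of L] assms(1) by (intro add_mono sum_mono) (auto simp: KL M_def n_def)
  finally show ?thesis .
qed

end
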